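(* Let $(M,\mathbf g)$ be a $(d+1)$-dimensional spacetime carrying a steady flow of radiation fluid with respect to a timelike Killing vector field $\boldsymbol\xi$ on a neighborhood $U$ of a point $p$, with fluid variables of class $C^2$ near $p$. If $p$ is a sonic point, then $$\boldsymbol\sigma(\bar{\boldsymbol\xi},\bar{\boldsymbol\xi})|_p=0,\qquad \mathcal L_{\bar{\boldsymbol\eta}}\big[\boldsymbol\sigma(\bar{\boldsymbol\xi},\bar{\boldsymbol\xi})\big]\big|_p\ge 0,$$ where $\boldsymbol\sigma$ is the shear tensor of the streamline congruence.
   Context: A perfect fluid on a $(d+1)$-dimensional Lorentzian spacetime consists of positive functions $n,h,P,s,T$ (number density, specific enthalpy, pressure, specific entropy, temperature) and a vector field $\mathbf u$, $\mathbf u\cdot\mathbf u=-1$, satisfying $\mathbf d h=T\,\mathbf d s+n^{-1}\mathbf d P$, $\nabla\cdot(n\mathbf u)=0$, $\nabla\cdot(nh\,\mathbf u\otimes\mathbf u+P\,\mathbf g^{-1})=0$ and an equation of state $h=h(P,s)$, with speed of sound $v_{\rm s}^2=(\partial\ln h/\partial\ln n)_s$. A radiation fluid is one whose equation of state gives $v_{\rm s}\equiv1/\sqrt d$. The flow is steady w.r.t. the timelike Killing field $\boldsymbol\xi$ on $U$ if $\mathcal L_{\boldsymbol\xi}P=\mathcal L_{\boldsymbol\xi}s=0$, $\mathcal L_{\boldsymbol\xi}\mathbf u=0$. Set $\bar{\boldsymbol\xi}=\boldsymbol\xi/\sqrt{|\boldsymbol\xi\cdot\boldsymbol\xi|}$,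 write $\mathbf u=(1-v^2)^{-1/2}(\bar{\boldsymbol\xi}+v\bar{\boldsymbol\eta})$ with $v\in[0,1)$, $\bar{\boldsymbol\eta}$ unit spacelike orthogonal to $\bar{\boldsymbol\xi}$ and $\mathcal L_{\boldsymbol\xi}\bar{\boldsymbol\eta}=0$ (integral curves of $\bar{\boldsymbol\eta}$: streamlines). With $B_{\mu\nu}=\nabla_\mu\bar\eta_\nu$, $\mathbf a=\nabla_{\bar{\boldsymbol\eta}}\bar{\boldsymbol\eta}$, $\mathbf g^\perp=\mathbf g-\bar{\boldsymbol\eta}^\flat\otimes\bar{\boldsymbol\eta}^\flat$, decompose $\mathbf B-\bar{\boldsymbol\eta}^\flat\otimes\mathbf a^\flat=\frac{\Theta}{d}\mathbf g^\perp+\boldsymbol\sigma+\boldsymbol\omega$ with $\Theta=\nabla\cdot\bar{\boldsymbol\eta}$, $\boldsymbol\sigma$ symmetric trace-free (shear), $\boldsymbol\omega$ antisymmetric. A sonic point is a point with $v=v_{\rm s}$. *)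

theory Defs
  imports "HOL-Analysis.Analysis"
begin

text \<open>Everything is expressed in a coordinate chart: points of the chart domain are
vectors in real^'n, where CARD('n) = d+1.  Vector fields are maps real^'n => real^'n
(contravariant components X$mu), covector fields likewise (covariant components),
the metric is a field of matrices G x $ mu $ nu.\<close>

definition pd :: "(real^'n \<Rightarrow> real) \<Rightarrow> 'n \<Rightarrow> real^'n \<Rightarrow> real" where
  "pd f i x = frechet_derivative f (at x) (axis i 1)"

fun Ck :: "nat \<Rightarrow> (real^'n) set \<Rightarrow> (real^'n \<Rightarrow> real) \<Rightarrow> bool" where
  "Ck 0 U f = continuous_on U f"
| "Ck (Suc k) U f = ((\<forall>x\<in>U. f differentiable (at x)) \<and> (\<forall>i. Ck k U (pd f i)))"

definition smooth_on :: "(real^'n) set \<Rightarrow> (real^'n \<Rightarrow> real) \<Rightarrow> bool" where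
  "smooth_on U f = (\<forall>k. Ck k U f)"

definition lorentzian_matrix :: "real^'n^'n \<Rightarrow> bool" where
  "lorentzian_matrix A = (transpose A = A \<and>
     (\<exists>t::'n. \<exists>C::real^'n^'n. invertible C \<and>
        transpose C ** A ** C = (\<chi> i j. if i = j then (if i = t then -1 else 1) else 0)))"

definition ginv :: "(real^'n \<Rightarrow> real^'n^'n) \<Rightarrow> real^'n \<Rightarrow> real^'n^'n" where
  "ginv G x = matrix_inv (G x)"

definition christoffel :: "(real^'n \<Rightarrow> real^'n^'n) \<Rightarrow> 'n \<Rightarrow> 'n \<Rightarrow> 'n \<Rightarrow> real^'n \<Rightarrow> real" where
  "christoffel G l m n x = (1/2) * (\<Sum>k\<in>UNIV. ginv G x $ l $ k *
      (pd (\<lambda>y. G y $ k $ n) m x + pd (\<lambda>y. G y $ k $ m) n x - pd (\<lambda>y. G y $ m $ n) k x))"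

definition gdot :: "(real^'n \<Rightarrow> real^'n^'n) \<Rightarrow> real^'n \<Rightarrow> real^'n \<Rightarrow> real^'n \<Rightarrow> real" where
  "gdot G x X Y = (\<Sum>m\<in>UNIV. \<Sum>n\<in>UNIV. G x $ m $ n * X $ m * Y $ n)"

definition lower :: "(real^'n \<Rightarrow> real^'n^'n) \<Rightarrow> (real^'n \<Rightarrow> real^'n) \<Rightarrow> real^'n \<Rightarrow> real^'n" where
  "lower G X x = (\<chi> n. \<Sum>l\<in>UNIV. G x $ n $ l * X x $ l)"

definition cd_covec :: "(real^'n \<Rightarrow> real^'n^'n) \<Rightarrow> (real^'n \<Rightarrow> real^'n) \<Rightarrow> 'n \<Rightarrow> 'n \<Rightarrow> real^'n \<Rightarrow> real" where
  "cd_covec G w m n x = pd (\<lambda>y. w y $ n) m x - (\<Sum>l\<in>UNIV. christoffel G l m n x * w x $ l)"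

definition cd_vec :: "(real^'n \<Rightarrow> real^'n^'n) \<Rightarrow> (real^'n \<Rightarrow> real^'n) \<Rightarrow> 'n \<Rightarrow> 'n \<Rightarrow> real^'n \<Rightarrow> real" where
  "cd_vec G X m n x = pd (\<lambda>y. X y $ n) m x + (\<Sum>l\<in>UNIV. christoffel G n m l x * X x $ l)"

definition div_vec :: "(real^'n \<Rightarrow> real^'n^'n) \<Rightarrow> (real^'n \<Rightarrow> real^'n) \<Rightarrow> real^'n \<Rightarrow> real" where
  "div_vec G X x = (\<Sum>m\<in>UNIV. cd_vec G X m m x)"

definition div_tensor :: "(real^'n \<Rightarrow> real^'n^'n) \<Rightarrow> (real^'n \<Rightarrow> real^'n^'n) \<Rightarrow> 'n \<Rightarrow> real^'n \<Rightarrow> real" where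
  "div_tensor G T n x = (\<Sum>m\<in>UNIV. pd (\<lambda>y. T y $ m $ n) m x)
     + (\<Sum>m\<in>UNIV. \<Sum>l\<in>UNIV. christoffel G m m l x * T x $ l $ n)
     + (\<Sum>m\<in>UNIV. \<Sum>l\<in>UNIV. christoffel G n m l x * T x $ m $ l)"

definition lie_fun :: "(real^'n \<Rightarrow> real^'n) \<Rightarrow> (real^'n \<Rightarrow> real) \<Rightarrow> real^'n \<Rightarrow> real" where
  "lie_fun X f x = (\<Sum>m\<in>UNIV. X x $ m * pd f m x)"

definition lie_vec :: "(real^'n \<Rightarrow> real^'n) \<Rightarrow> (real^'n \<Rightarrow> real^'n) \<Rightarrow> real^'n \<Rightarrow> real^'n" where
  "lie_vec X Y x = (\<chi> n. \<Sum>m\<in>UNIV. X x $ m * pd (\<lambda>y. Y y $ n) m x - Y x $ m * pd (\<lambda>y. X y $ n) m x)"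

definition killing_on :: "(real^'n \<Rightarrow> real^'n^'n) \<Rightarrow> (real^'n \<Rightarrow> real^'n) \<Rightarrow> (real^'n) set \<Rightarrow> bool" where
  "killing_on G X U = (\<forall>x\<in>U. \<forall>m n. (\<Sum>l\<in>UNIV. X x $ l * pd (\<lambda>y. G y $ m $ n) l x
       + G x $ l $ n * pd (\<lambda>y. X y $ l) m x + G x $ m $ l * pd (\<lambda>y. X y $ l) n x) = 0)"

text \<open>Equation of state h = H(P,s).  Thermodynamics (dh = T ds + n^{-1} dP) gives the
state functions n = (dh/dP)_s^{-1}, T = (dh/ds)_P.\<close>
definition eos_hP :: "(real \<Rightarrow> real \<Rightarrow> real) \<Rightarrow> real \<Rightarrow> real \<Rightarrow> real" where
  "eos_hP H P s = deriv (\<lambda>q. H q s) P"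

definition eos_hs :: "(real \<Rightarrow> real \<Rightarrow> real) \<Rightarrow> real \<Rightarrow> real \<Rightarrow> real" where
  "eos_hs H P s = deriv (\<lambda>r. H P r) s"

definition eos_n :: "(real \<Rightarrow> real \<Rightarrow> real) \<Rightarrow> real \<Rightarrow> real \<Rightarrow> real" where
  "eos_n H P s = 1 / eos_hP H P s"

text \<open>Squared speed of sound (d ln h / d ln n)_s, computed along fixed s with P as parameter.\<close>
definition sound_speed_sq :: "(real \<Rightarrow> real \<Rightarrow> real) \<Rightarrow> real \<Rightarrow> real \<Rightarrow> real" where
  "sound_speed_sq H P s = deriv (\<lambda>q. ln (H q s)) P / deriv (\<lambda>q. ln (eos_n H q s)) P"

definition radiation_eos :: "real \<Rightarrow> (real \<Rightarrow> real \<Rightarrow> real) \<Rightarrow> bool" where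
  "radiation_eos d H = (\<forall>P>0. \<forall>s>0.
      H P s > 0 \<and> eos_hP H P s > 0 \<and>
      (\<lambda>q. H q s) differentiable (at P) \<and> (\<lambda>q. eos_hP H q s) differentiable (at P) \<and>
      (\<lambda>r. H P r) differentiable (at s) \<and>
      sound_speed_sq H P s = 1 / d)"

definition perfect_fluid_on ::
  "(real^'n \<Rightarrow> real^'n^'n) \<Rightarrow> (real^'n) set \<Rightarrow> (real \<Rightarrow> real \<Rightarrow> real) \<Rightarrow>
   (real^'n \<Rightarrow> real) \<Rightarrow> (real^'n \<Rightarrow> real) \<Rightarrow> (real^'n \<Rightarrow> real) \<Rightarrow> (real^'n \<Rightarrow> real) \<Rightarrow>
   (real^'n \<Rightarrow> real) \<Rightarrow> (real^'n \<Rightarrow> real^'n) \<Rightarrow> bool" where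
  "perfect_fluid_on G U H n h P s T u =
    ((\<forall>x\<in>U. n x > 0 \<and> h x > 0 \<and> P x > 0 \<and> s x > 0 \<and> T x > 0) \<and>
     (\<forall>x\<in>U. gdot G x (u x) (u x) = -1) \<and>
     (\<forall>x\<in>U. \<forall>m. pd h m x = T x * pd s m x + pd P m x / n x) \<and>
     (\<forall>x\<in>U. div_vec G (\<lambda>y. n y *\<^sub>R u y) x = 0) \<and>
     (\<forall>x\<in>U. \<forall>k. div_tensor G (\<lambda>y. \<chi> i j. n y * h y * u y $ i * u y $ j + P y * ginv G y $ i $ j) k x = 0) \<and>
     (\<forall>x\<in>U. h x = H (P x) (s x) \<and> n x = eos_n H (P x) (s x) \<and> T x = eos_hs H (P x) (s x)))"

end

theory Submission
  imports Defs
begin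


lemma pd_has: "(f has_derivative D) (at x) \<Longrightarrow> pd f i x = D (axis i 1)"
  unfolding pd_def using frechet_derivative_at by metis

lemma pd_local:
  assumes "open W" "x \<in> W" "\<And>y. y \<in> W \<Longrightarrow> f y = g y"
  shows "pd f i x = pd g i x"
proof -
  have "\<And>D. (f has_derivative D) (at x) \<longleftrightarrow> (g has_derivative D) (at x)"
    using has_derivative_transform_within_open assms by (metis)
  then show ?thesis unfolding pd_def frechet_derivative_def by simp
qed

lemma diff_local:
  assumes "open W" "x \<in> W" "\<And>y. y \<in> W \<Longrightarrow> f y = g y" "f differentiable (at x)"
  shows "g differentiable (at x)"
  using assms has_derivative_transform_within_open unfolding differentiable_def by metis

lemma pd_const[simp]: "pd (\<lambda>y. c) i x = 0"
  using pd_has[of "\<lambda>y. c" "\<lambda>h. 0" x i] by simp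

lemma pd_add:
  assumes "f differentiable (at x)" "g differentiable (at x)"
  shows "pd (\<lambda>y. f y + g y) i x = pd f i x + pd g i x"
  using pd_has[OF has_derivative_add[OF frechet_derivative_works[THEN iffD1, OF assms(1)]
         frechet_derivative_works[THEN iffD1, OF assms(2)]]] unfolding pd_def by simp

lemma pd_diff:
  assumes "f differentiable (at x)" "g differentiable (at x)"
  shows "pd (\<lambda>y. f y - g y) i x = pd f i x - pd g i x"
  using pd_has[OF has_derivative_diff[OF frechet_derivative_works[THEN iffD1, OF assms(1)]
         frechet_derivative_works[THEN iffD1, OF assms(2)]]] unfolding pd_def by simp

lemma pd_mult:
  assumes "f differentiable (at x)" "g differentiable (at x)"
  shows "pd (\<lambda>y. f y * g y) i x = pd f i x * g x + f x * pd g i x"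
  using pd_has[OF has_derivative_mult[OF frechet_derivative_works[THEN iffD1, OF assms(1)]
         frechet_derivative_works[THEN iffD1, OF assms(2)]]] unfolding pd_def by simp

lemma pd_cmult:
  assumes "f differentiable (at x)"
  shows "pd (\<lambda>y. c * f y) i x = c * pd f i x"
  using pd_mult[OF differentiable_const assms] by simp

lemma pd_sum:
  assumes "finite S" "\<And>l. l \<in> S \<Longrightarrow> f l differentiable (at x)"
  shows "pd (\<lambda>y. \<Sum>l\<in>S. f l y) i x = (\<Sum>l\<in>S. pd (f l) i x)"
proof -
  have "((\<lambda>y. \<Sum>l\<in>S. f l y) has_derivative (\<lambda>h. \<Sum>l\<in>S. frechet_derivative (f l) (at x) h)) (at x)"
    by (rule has_derivative_sum) (use assms frechet_derivative_works in blast)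
  from pd_has[OF this] show ?thesis unfolding pd_def by simp
qed

lemma pd_comp:
  assumes "(\<phi> has_real_derivative d) (at (f x))" "f differentiable (at x)"
  shows "pd (\<lambda>y. \<phi> (f y)) i x = d * pd f i x"
proof -
  have "((\<lambda>y. \<phi> (f y)) has_derivative (\<lambda>h. d * frechet_derivative f (at x) h)) (at x)"
    using has_derivative_compose[OF frechet_derivative_works[THEN iffD1, OF assms(2)]
        assms(1)[unfolded has_field_derivative_def]] by (simp add: mult.commute)
  from pd_has[OF this] show ?thesis unfolding pd_def by simp
qed

lemma diff_comp:
  assumes "(\<phi> has_real_derivative d) (at (f x))" "f differentiable (at x)"
  shows "(\<lambda>y. \<phi> (f y)) differentiable (at x)"
  using has_derivative_compose[OF frechet_derivative_works[THEN iffD1, OF assms(2)]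
        assms(1)[unfolded has_field_derivative_def]] unfolding differentiable_def by blast

lemma pd_zero_local:
  assumes "open W" "x \<in> W" "\<And>y. y \<in> W \<Longrightarrow> f y = c"
  shows "pd f i x = 0"
  using pd_local[OF assms, where i=i] by simp



lemma lor_invertible:
  fixes A :: "real^'n^'n"
  assumes "lorentzian_matrix A" shows "invertible A"
proof -
  obtain t :: 'n and C :: "real^'n^'n" where C: "invertible C"
    "transpose C ** A ** C = (\<chi> i j. if i = j then (if i = t then -1 else 1) else 0)"
    using assms unfolding lorentzian_matrix_def by blast
  let ?D = "(\<chi> i j. if i = j then (if i = t then -1 else 1) else 0) :: real^'n^'n"
  have "det ?D = (\<Prod>i\<in>UNIV. ?D $ i $ i)"
    by (rule det_diagonal) simp
  also have "\<dots> \<noteq> 0" by (simp add: prod_zero_iff)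
  finally have "det ?D \<noteq> 0" .
  hence "det (transpose C) * det A * det C \<noteq> 0" using C(2) by (metis det_mul)
  thus ?thesis by (simp add: invertible_det_nz)
qed

lemma inv_props:
  fixes A :: "real^'n^'n"
  assumes "invertible A"
  shows "A ** matrix_inv A = mat 1" "matrix_inv A ** A = mat 1"
  using someI_ex[OF assms[unfolded invertible_def]] unfolding matrix_inv_def by auto

lemma inv_sym:
  fixes A :: "real^'n^'n"
  assumes "invertible A" "transpose A = A"
  shows "transpose (matrix_inv A) = matrix_inv A"
proof -
  let ?B = "matrix_inv A"
  have "transpose ?B ** A = mat 1"
    by (metis assms(2) inv_props(1)[OF assms(1)] matrix_transpose_mul transpose_mat)
  then have "transpose ?B = transpose ?B ** (A ** ?B)" 
    using inv_props(1)[OF assms(1)] by (simp add: matrix_mul_rid)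
  also have "\<dots> = ?B" using \<open>transpose ?B ** A = mat 1\<close>
    by (simp add: matrix_mul_assoc matrix_mul_lid)
  finally show ?thesis .
qed

lemma inv_sum_right:
  fixes A :: "real^'n^'n"
  assumes "invertible A"
  shows "(\<Sum>k\<in>UNIV. A $ i $ k * matrix_inv A $ k $ j) = (if i = j then 1 else 0)"
proof -
  have "(A ** matrix_inv A) $ i $ j = (mat 1 :: real^'n^'n) $ i $ j" using inv_props(1)[OF assms] by simp
  thus ?thesis by (simp add: matrix_matrix_mult_def mat_def)
qed

lemma inv_sum_left:
  fixes A :: "real^'n^'n"
  assumes "invertible A"
  shows "(\<Sum>k\<in>UNIV. matrix_inv A $ i $ k * A $ k $ j) = (if i = j then 1 else 0)"
proof -
  have "(matrix_inv A ** A) $ i $ j = (mat 1 :: real^'n^'n) $ i $ j" using inv_props(2)[OF assms] by simp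
  thus ?thesis by (simp add: matrix_matrix_mult_def mat_def)
qed

lemma inv_entry:
  fixes A :: "real^'n^'n"
  assumes "invertible A"
  shows "matrix_inv A $ k $ j =
     det (\<chi> a c. if c = k then (if a = j then 1 else 0) else A $ a $ c) / det A"
proof -
  let ?b = "(\<chi> a. if a = j then 1 else 0) :: real^'n"
  let ?x = "(\<chi> c. matrix_inv A $ c $ j) :: real^'n"
  have d0: "det A \<noteq> 0" using assms by (simp add: invertible_det_nz)
  have "A *v ?x = ?b"
    using inv_sum_right[OF assms] by (simp add: matrix_vector_mult_def vec_eq_iff)
  hence "?x = (\<chi> k. det(\<chi> i c. if c=k then ?b$i else A$i$c) / det A)"
    using cramer[OF d0] by blast
  hence "?x $ k = det(\<chi> i c. if c=k then ?b$i else A$i$c) / det A" by simp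
  moreover have "(\<chi> i c. if c=k then ?b$i else A$i$c) = (\<chi> a c. if c = k then (if a = j then 1 else 0) else A $ a $ c)"
    by (simp add: vec_eq_iff)
  ultimately show ?thesis by simp
qed

lemma det_differentiable:
  fixes M :: "real^'m \<Rightarrow> real^'n^'n"
  assumes "\<And>a c. (\<lambda>y. M y $ a $ c) differentiable (at x)"
  shows "(\<lambda>y. det (M y)) differentiable (at x)"
proof -
  have P: "(\<lambda>y. \<Prod>i\<in>UNIV. M y $ i $ p i) differentiable (at x)" for p :: "'n \<Rightarrow> 'n"
  proof -
    have "\<And>i. ((\<lambda>y. M y $ i $ p i) has_derivative frechet_derivative (\<lambda>y. M y $ i $ p i) (at x)) (at x)"
      using assms frechet_derivative_works by blast
    from has_derivative_prod[of UNIV "\<lambda>i y. M y $ i $ p i", OF this] show ?thesis unfolding differentiable_def by blast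
  qed
  show ?thesis unfolding det_def
    by (rule differentiable_sum) (auto intro!: differentiable_mult P simp: finite_permutations)
qed



locale pt =
  fixes G :: "real^'n \<Rightarrow> real^'n^'n" and x :: "real^'n"
  assumes Gd: "\<And>i j. (\<lambda>y. G y $ i $ j) differentiable (at x)"
    and gs: "\<And>i j. G x $ i $ j = G x $ j $ i"
    and ginvt: "invertible (G x)"
    and dgs: "\<And>k i j. pd (\<lambda>y. G y $ i $ j) k x = pd (\<lambda>y. G y $ j $ i) k x"
begin

abbreviation "g i j \<equiv> G x $ i $ j"
abbreviation "gi i j \<equiv> ginv G x $ i $ j"
abbreviation "dg k i j \<equiv> pd (\<lambda>y. G y $ i $ j) k x"

lemma gR: "(\<Sum>l\<in>UNIV. g i l * gi l j) = (if i = j then 1 else 0)"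
  using inv_sum_right[OF ginvt] unfolding ginv_def .
lemma gL: "(\<Sum>l\<in>UNIV. gi i l * g l j) = (if i = j then 1 else 0)"
  using inv_sum_left[OF ginvt] unfolding ginv_def .
lemma gis: "gi i j = gi j i"
proof -
  have "transpose (matrix_inv (G x)) = matrix_inv (G x)"
    by (rule inv_sym[OF ginvt]) (simp add: vec_eq_iff transpose_def gs)
  hence "transpose (matrix_inv (G x)) $ i $ j = matrix_inv (G x) $ i $ j" by simp
  thus ?thesis unfolding ginv_def transpose_def by simp
qed

lemma glow: "(\<Sum>l\<in>UNIV. g k l * christoffel G l m n x) = (dg m k n + dg n k m - dg k m n) / 2"
proof -
  have "(\<Sum>l\<in>UNIV. g k l * christoffel G l m n x)
     = (\<Sum>l\<in>UNIV. \<Sum>j\<in>UNIV. (1/2) * (g k l * gi l j) * (dg m j n + dg n j m - dg j m n))"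
    unfolding christoffel_def by (simp add: sum_distrib_left mult.assoc)
  also have "\<dots> = (\<Sum>j\<in>UNIV. (1/2) * (\<Sum>l\<in>UNIV. g k l * gi l j) * (dg m j n + dg n j m - dg j m n))"
    by (subst sum.swap) (simp add: sum_distrib_right sum_distrib_left)
  also have "\<dots> = (\<Sum>j\<in>UNIV. if k = j then (1/2) * (dg m j n + dg n j m - dg j m n) else 0)"
    by (rule sum.cong) (auto simp: gR)
  also have "\<dots> = (dg m k n + dg n k m - dg k m n) / 2"
    by simp
  finally show ?thesis .
qed

lemma chr_sym: "christoffel G l m n x = christoffel G l n m x"
  unfolding christoffel_def by (simp add: dgs algebra_simps)

lemma chr_trace: "(\<Sum>m\<in>UNIV. christoffel G m m l x) = (\<Sum>m\<in>UNIV. \<Sum>k\<in>UNIV. gi m k * dg l m k) / 2"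
proof -
  have "(\<Sum>m\<in>UNIV. christoffel G m m l x) = (1/2) * ((\<Sum>m\<in>UNIV. \<Sum>k\<in>UNIV. gi m k * dg m k l)
      + (\<Sum>m\<in>UNIV. \<Sum>k\<in>UNIV. gi m k * dg l k m) - (\<Sum>m\<in>UNIV. \<Sum>k\<in>UNIV. gi m k * dg k m l))"
    unfolding christoffel_def by (simp add: sum_distrib_left sum_subtractf sum.distrib algebra_simps)
  moreover have "(\<Sum>m\<in>UNIV. \<Sum>k\<in>UNIV. gi m k * dg k m l) = (\<Sum>m\<in>UNIV. \<Sum>k\<in>UNIV. gi m k * dg m k l)"
    by (subst sum.swap) (simp add: gis)
  ultimately show ?thesis by (simp add: dgs)
qed

end


context pt begin

definition Kil :: "(real^'n \<Rightarrow> real^'n) \<Rightarrow> 'n \<Rightarrow> 'n \<Rightarrow> real" where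
  "Kil X m n = (\<Sum>l\<in>UNIV. X x $ l * dg l m n + g l n * pd (\<lambda>y. X y $ l) m x
       + g m l * pd (\<lambda>y. X y $ l) n x)"

definition DX :: "(real^'n \<Rightarrow> real^'n) \<Rightarrow> (real^'n \<Rightarrow> real^'n) \<Rightarrow> 'n \<Rightarrow> real" where
  "DX A X m = (\<Sum>k\<in>UNIV. X x $ k * pd (\<lambda>y. A y $ m) k x)"

lemma pd_lower:
  assumes Xd: "\<And>l. (\<lambda>y. X y $ l) differentiable (at x)"
  shows "pd (\<lambda>y. lower G X y $ n) m x = (\<Sum>l\<in>UNIV. dg m n l * X x $ l + g n l * pd (\<lambda>y. X y $ l) m x)"
proof -
  have "pd (\<lambda>y. lower G X y $ n) m x = pd (\<lambda>y. \<Sum>l\<in>UNIV. G y $ n $ l * X y $ l) m x"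
    unfolding lower_def by simp
  also have "\<dots> = (\<Sum>l\<in>UNIV. pd (\<lambda>y. G y $ n $ l * X y $ l) m x)"
    by (rule pd_sum) (auto intro!: differentiable_mult Gd Xd)
  also have "\<dots> = (\<Sum>l\<in>UNIV. dg m n l * X x $ l + g n l * pd (\<lambda>y. X y $ l) m x)"
    by (rule sum.cong) (auto simp: pd_mult Gd Xd)
  finally show ?thesis .
qed

lemma lower_diff:
  assumes Xd: "\<And>l. (\<lambda>y. X y $ l) differentiable (at x)"
  shows "(\<lambda>y. lower G X y $ n) differentiable (at x)"
  unfolding lower_def by (auto intro!: differentiable_sum differentiable_mult Gd Xd)

lemma cd_lower:
  assumes Xd: "\<And>l. (\<lambda>y. X y $ l) differentiable (at x)"
  shows "cd_covec G (lower G X) m n x = (\<Sum>l\<in>UNIV. dg m n l * X x $ l + g n l * pd (\<lambda>y. X y $ l) m x)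
      - (\<Sum>j\<in>UNIV. X x $ j * (dg m j n + dg n j m - dg j m n) / 2)"
proof -
  have "(\<Sum>l\<in>UNIV. christoffel G l m n x * lower G X x $ l)
      = (\<Sum>l\<in>UNIV. \<Sum>j\<in>UNIV. christoffel G l m n x * (g l j * X x $ j))"
    unfolding lower_def by (simp add: sum_distrib_left)
  also have "\<dots> = (\<Sum>j\<in>UNIV. X x $ j * (\<Sum>l\<in>UNIV. g j l * christoffel G l m n x))"
    by (subst sum.swap) (simp add: sum_distrib_left gs algebra_simps)
  also have "\<dots> = (\<Sum>j\<in>UNIV. X x $ j * (dg m j n + dg n j m - dg j m n) / 2)"
    by (simp add: glow)
  finally show ?thesis unfolding cd_covec_def pd_lower[OF Xd] by simp
qed

lemma cd_sym_kil:
  assumes Xd: "\<And>l. (\<lambda>y. X y $ l) differentiable (at x)"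
  shows "cd_covec G (lower G X) m n x + cd_covec G (lower G X) n m x = Kil X m n"
  unfolding cd_lower[OF Xd] Kil_def
  by (simp add: sum.distrib sum_subtractf algebra_simps sum_divide_distrib[symmetric] dgs gs)

end


lemma sw3: "(\<Sum>k\<in>A. \<Sum>m\<in>B. \<Sum>n\<in>C. f k m n) = (\<Sum>m\<in>B. \<Sum>n\<in>C. \<Sum>k\<in>A. f k m n)"
  by (subst sum.swap) (rule sum.cong, simp, rule sum.swap)

context pt begin

lemma pd_gdot:
  assumes Ad: "\<And>l. (\<lambda>y. A y $ l) differentiable (at x)"
    and Bd: "\<And>l. (\<lambda>y. B y $ l) differentiable (at x)"
  shows "pd (\<lambda>y. gdot G y (A y) (B y)) k x = (\<Sum>m\<in>UNIV. \<Sum>n\<in>UNIV. dg k m n * A x $ m * B x $ n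
     + g m n * pd (\<lambda>y. A y $ m) k x * B x $ n + g m n * A x $ m * pd (\<lambda>y. B y $ n) k x)"
proof -
  have "pd (\<lambda>y. gdot G y (A y) (B y)) k x = (\<Sum>m\<in>UNIV. pd (\<lambda>y. \<Sum>n\<in>UNIV. G y $ m $ n * A y $ m * B y $ n) k x)"
    unfolding gdot_def
    by (rule pd_sum) (auto intro!: differentiable_sum differentiable_mult Gd Ad Bd)
  also have "\<dots> = (\<Sum>m\<in>UNIV. \<Sum>n\<in>UNIV. pd (\<lambda>y. G y $ m $ n * A y $ m * B y $ n) k x)"
    by (rule sum.cong, simp, rule pd_sum) (auto intro!: differentiable_sum differentiable_mult Gd Ad Bd)
  also have "\<dots> = (\<Sum>m\<in>UNIV. \<Sum>n\<in>UNIV. dg k m n * A x $ m * B x $ n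
     + g m n * pd (\<lambda>y. A y $ m) k x * B x $ n + g m n * A x $ m * pd (\<lambda>y. B y $ n) k x)"
    by (intro sum.cong refl) (simp add: pd_mult Gd Ad Bd differentiable_mult algebra_simps)
  finally show ?thesis .
qed

lemma gdot_diff:
  assumes Ad: "\<And>l. (\<lambda>y. A y $ l) differentiable (at x)"
    and Bd: "\<And>l. (\<lambda>y. B y $ l) differentiable (at x)"
  shows "(\<lambda>y. gdot G y (A y) (B y)) differentiable (at x)"
  unfolding gdot_def by (auto intro!: differentiable_sum differentiable_mult Gd Ad Bd)

lemma lie_gdot:
  assumes Ad: "\<And>l. (\<lambda>y. A y $ l) differentiable (at x)"
    and Bd: "\<And>l. (\<lambda>y. B y $ l) differentiable (at x)"
  shows "lie_fun X (\<lambda>y. gdot G y (A y) (B y)) x =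
     (\<Sum>m\<in>UNIV. \<Sum>n\<in>UNIV. (\<Sum>l\<in>UNIV. X x $ l * dg l m n) * A x $ m * B x $ n)
   + (\<Sum>m\<in>UNIV. \<Sum>n\<in>UNIV. g m n * DX A X m * B x $ n)
   + (\<Sum>m\<in>UNIV. \<Sum>n\<in>UNIV. g m n * A x $ m * DX B X n)"
proof -
  have "lie_fun X (\<lambda>y. gdot G y (A y) (B y)) x = (\<Sum>l\<in>UNIV. \<Sum>m\<in>UNIV. \<Sum>n\<in>UNIV. 
     X x $ l * dg l m n * A x $ m * B x $ n
     + g m n * (X x $ l * pd (\<lambda>y. A y $ m) l x) * B x $ n + g m n * A x $ m * (X x $ l * pd (\<lambda>y. B y $ n) l x))"
    unfolding lie_fun_def pd_gdot[OF Ad Bd] by (simp add: sum_distrib_left algebra_simps)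
  also have "\<dots> = (\<Sum>m\<in>UNIV. \<Sum>n\<in>UNIV. \<Sum>l\<in>UNIV. 
     X x $ l * dg l m n * A x $ m * B x $ n
     + g m n * (X x $ l * pd (\<lambda>y. A y $ m) l x) * B x $ n + g m n * A x $ m * (X x $ l * pd (\<lambda>y. B y $ n) l x))"
    by (rule sw3)
  also have "\<dots> = (\<Sum>m\<in>UNIV. \<Sum>n\<in>UNIV. (\<Sum>l\<in>UNIV. X x $ l * dg l m n) * A x $ m * B x $ n)
   + (\<Sum>m\<in>UNIV. \<Sum>n\<in>UNIV. g m n * DX A X m * B x $ n)
   + (\<Sum>m\<in>UNIV. \<Sum>n\<in>UNIV. g m n * A x $ m * DX B X n)"
    unfolding DX_def by (simp add: sum.distrib sum_distrib_left sum_distrib_right)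
  finally show ?thesis .
qed

end


lemma delta1: "(\<Sum>l\<in>(UNIV::'n::finite set). (if m = l then 1 else 0) * f l) = (f m :: real)"
proof -
  have "(\<Sum>l\<in>(UNIV::'n set). (if m = l then 1 else 0) * f l) = (\<Sum>l\<in>UNIV. if m = l then f l else 0)"
    by (rule sum.cong) auto
  thus ?thesis by simp
qed

context pt begin

lemma kil_contr:
  "(\<Sum>m\<in>UNIV. \<Sum>n\<in>UNIV. A x $ m * B x $ n * Kil X m n) =
     (\<Sum>m\<in>UNIV. \<Sum>n\<in>UNIV. (\<Sum>l\<in>UNIV. X x $ l * dg l m n) * A x $ m * B x $ n)
   + (\<Sum>m\<in>UNIV. \<Sum>n\<in>UNIV. g m n * DX X A m * B x $ n)
   + (\<Sum>m\<in>UNIV. \<Sum>n\<in>UNIV. g m n * A x $ m * DX X B n)"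
proof -
  have e: "(\<Sum>m\<in>UNIV. \<Sum>n\<in>UNIV. A x $ m * B x $ n * Kil X m n) =
     (\<Sum>m\<in>UNIV. \<Sum>n\<in>UNIV. (\<Sum>l\<in>UNIV. X x $ l * dg l m n) * A x $ m * B x $ n)
   + (\<Sum>m\<in>UNIV. \<Sum>n\<in>UNIV. \<Sum>l\<in>UNIV. A x $ m * B x $ n * (g l n * pd (\<lambda>y. X y $ l) m x))
   + (\<Sum>m\<in>UNIV. \<Sum>n\<in>UNIV. \<Sum>l\<in>UNIV. A x $ m * B x $ n * (g m l * pd (\<lambda>y. X y $ l) n x))"
    unfolding Kil_def by (simp add: sum.distrib sum_distrib_left sum_distrib_right algebra_simps)
  have t2: "(\<Sum>m\<in>UNIV. \<Sum>n\<in>UNIV. \<Sum>l\<in>UNIV. A x $ m * B x $ n * (g l n * pd (\<lambda>y. X y $ l) m x))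
      = (\<Sum>m\<in>UNIV. \<Sum>n\<in>UNIV. g m n * DX X A m * B x $ n)"
  proof -
    have "(\<Sum>m\<in>UNIV. \<Sum>n\<in>UNIV. \<Sum>l\<in>UNIV. A x $ m * B x $ n * (g l n * pd (\<lambda>y. X y $ l) m x))
       = (\<Sum>n\<in>UNIV. \<Sum>l\<in>UNIV. \<Sum>m\<in>UNIV. A x $ m * B x $ n * (g l n * pd (\<lambda>y. X y $ l) m x))"
      by (rule sw3)
    also have "\<dots> = (\<Sum>l\<in>UNIV. \<Sum>n\<in>UNIV. \<Sum>m\<in>UNIV. A x $ m * B x $ n * (g l n * pd (\<lambda>y. X y $ l) m x))"
      by (rule sum.swap)
    also have "\<dots> = (\<Sum>m\<in>UNIV. \<Sum>n\<in>UNIV. g m n * DX X A m * B x $ n)"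
      unfolding DX_def by (simp add: sum_distrib_left sum_distrib_right algebra_simps)
    finally show ?thesis .
  qed
  have t3: "(\<Sum>m\<in>UNIV. \<Sum>n\<in>UNIV. \<Sum>l\<in>UNIV. A x $ m * B x $ n * (g m l * pd (\<lambda>y. X y $ l) n x))
      = (\<Sum>m\<in>UNIV. \<Sum>n\<in>UNIV. g m n * A x $ m * DX X B n)"
  proof -
    have "(\<Sum>m\<in>UNIV. \<Sum>n\<in>UNIV. \<Sum>l\<in>UNIV. A x $ m * B x $ n * (g m l * pd (\<lambda>y. X y $ l) n x))
       = (\<Sum>m\<in>UNIV. \<Sum>l\<in>UNIV. \<Sum>n\<in>UNIV. A x $ m * B x $ n * (g m l * pd (\<lambda>y. X y $ l) n x))"
      by (rule sum.cong, simp, rule sum.swap)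
    also have "\<dots> = (\<Sum>m\<in>UNIV. \<Sum>n\<in>UNIV. g m n * A x $ m * DX X B n)"
      unfolding DX_def by (simp add: sum_distrib_left sum_distrib_right algebra_simps)
    finally show ?thesis .
  qed
  show ?thesis using e t2 t3 by simp
qed

lemma div_expand:
  "div_vec G X x = (\<Sum>m\<in>UNIV. pd (\<lambda>y. X y $ m) m x)
     + (\<Sum>l\<in>UNIV. X x $ l * (\<Sum>m\<in>UNIV. \<Sum>k\<in>UNIV. gi m k * dg l m k)) / 2"
proof -
  have "div_vec G X x = (\<Sum>m\<in>UNIV. pd (\<lambda>y. X y $ m) m x)
     + (\<Sum>l\<in>UNIV. X x $ l * (\<Sum>m\<in>UNIV. christoffel G m m l x))"
  proof -
    have "(\<Sum>m\<in>UNIV. \<Sum>l\<in>UNIV. christoffel G m m l x * X x $ l) = (\<Sum>l\<in>UNIV. \<Sum>m\<in>UNIV. christoffel G m m l x * X x $ l)"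
      by (rule sum.swap)
    thus ?thesis unfolding div_vec_def cd_vec_def
      by (simp add: sum.distrib sum_distrib_left sum_distrib_right algebra_simps)
  qed
  moreover have "(\<Sum>l\<in>UNIV. X x $ l * (\<Sum>m\<in>UNIV. christoffel G m m l x))
     = (\<Sum>l\<in>UNIV. X x $ l * (\<Sum>m\<in>UNIV. \<Sum>k\<in>UNIV. gi m k * dg l m k)) / 2"
    unfolding sum_divide_distrib[of "\<lambda>l. X x $ l * (\<Sum>m\<in>UNIV. \<Sum>k\<in>UNIV. gi m k * dg l m k)"]
    by (simp only: chr_trace times_divide_eq_right)
  ultimately show ?thesis by simp
qed

lemma trace_kil:
  "(\<Sum>m\<in>UNIV. \<Sum>n\<in>UNIV. gi m n * Kil X m n) = 2 * div_vec G X x"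
proof -
  have e: "(\<Sum>m\<in>UNIV. \<Sum>n\<in>UNIV. gi m n * Kil X m n) =
      (\<Sum>l\<in>UNIV. X x $ l * (\<Sum>m\<in>UNIV. \<Sum>k\<in>UNIV. gi m k * dg l m k))
    + (\<Sum>m\<in>UNIV. \<Sum>n\<in>UNIV. \<Sum>l\<in>UNIV. gi m n * (g l n * pd (\<lambda>y. X y $ l) m x))
    + (\<Sum>m\<in>UNIV. \<Sum>n\<in>UNIV. \<Sum>l\<in>UNIV. gi m n * (g m l * pd (\<lambda>y. X y $ l) n x))"
  proof -
    have "(\<Sum>m\<in>UNIV. \<Sum>n\<in>UNIV. \<Sum>l\<in>UNIV. gi m n * (X x $ l * dg l m n)) = (\<Sum>l\<in>UNIV. \<Sum>m\<in>UNIV. \<Sum>n\<in>UNIV. gi m n * (X x $ l * dg l m n))"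
      by (rule sw3[symmetric])
    thus ?thesis unfolding Kil_def by (simp add: sum.distrib sum_distrib_left sum_distrib_right algebra_simps)
  qed
  have t2: "(\<Sum>m\<in>UNIV. \<Sum>n\<in>UNIV. \<Sum>l\<in>UNIV. gi m n * (g l n * pd (\<lambda>y. X y $ l) m x))
     = (\<Sum>m\<in>UNIV. pd (\<lambda>y. X y $ m) m x)"
  proof -
    have "(\<Sum>m\<in>UNIV. \<Sum>n\<in>UNIV. \<Sum>l\<in>UNIV. gi m n * (g l n * pd (\<lambda>y. X y $ l) m x))
       = (\<Sum>m\<in>UNIV. \<Sum>l\<in>UNIV. (\<Sum>n\<in>UNIV. gi m n * g n l) * pd (\<lambda>y. X y $ l) m x)"
      by (rule sum.cong, simp, subst sum.swap) (simp add: sum_distrib_right sum_distrib_left gs algebra_simps)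
    also have "\<dots> = (\<Sum>m\<in>UNIV. pd (\<lambda>y. X y $ m) m x)"
      by (simp add: gL delta1)
    finally show ?thesis .
  qed
  have t3: "(\<Sum>m\<in>UNIV. \<Sum>n\<in>UNIV. \<Sum>l\<in>UNIV. gi m n * (g m l * pd (\<lambda>y. X y $ l) n x))
     = (\<Sum>m\<in>UNIV. pd (\<lambda>y. X y $ m) m x)"
  proof -
    have "(\<Sum>m\<in>UNIV. \<Sum>n\<in>UNIV. \<Sum>l\<in>UNIV. gi m n * (g m l * pd (\<lambda>y. X y $ l) n x))
       = (\<Sum>n\<in>UNIV. \<Sum>l\<in>UNIV. \<Sum>m\<in>UNIV. gi m n * (g m l * pd (\<lambda>y. X y $ l) n x))"
      by (rule sw3)
    also have "\<dots> = (\<Sum>n\<in>UNIV. \<Sum>l\<in>UNIV. (\<Sum>m\<in>UNIV. gi n m * g m l) * pd (\<lambda>y. X y $ l) n x)"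
      by (simp add: sum_distrib_right sum_distrib_left gis algebra_simps)
    also have "\<dots> = (\<Sum>n\<in>UNIV. pd (\<lambda>y. X y $ n) n x)"
      by (simp add: gL delta1)
    finally show ?thesis .
  qed
  show ?thesis using e t2 t3 div_expand[of X] by simp
qed

end


context pt begin

lemma euler_contr:
  assumes Td: "\<And>m k. (\<lambda>y. T y $ m $ k) differentiable (at x)"
    and Xd: "\<And>l. (\<lambda>y. X y $ l) differentiable (at x)"
  shows "(\<Sum>k\<in>UNIV. lower G X x $ k * div_tensor G T k x) =
     div_vec G (\<lambda>y. \<chi> m. \<Sum>k\<in>UNIV. T y $ m $ k * lower G X y $ k) x
     - (\<Sum>m\<in>UNIV. \<Sum>l\<in>UNIV. T x $ m $ l * cd_covec G (lower G X) m l x)"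
proof -
  define w where "w k = lower G X x $ k" for k
  define dw where "dw k m = pd (\<lambda>y. lower G X y $ k) m x" for k m
  define dT where "dT m k = pd (\<lambda>y. T y $ m $ k) m x" for m k
  have pV: "pd (\<lambda>y. (\<chi> m. \<Sum>k\<in>UNIV. T y $ m $ k * lower G X y $ k) $ m) m x
      = (\<Sum>k\<in>UNIV. dT m k * w k + T x $ m $ k * dw k m)" for m
  proof -
    have "pd (\<lambda>y. (\<chi> m. \<Sum>k\<in>UNIV. T y $ m $ k * lower G X y $ k) $ m) m x
        = pd (\<lambda>y. \<Sum>k\<in>UNIV. T y $ m $ k * lower G X y $ k) m x" by simp
    also have "\<dots> = (\<Sum>k\<in>UNIV. pd (\<lambda>y. T y $ m $ k * lower G X y $ k) m x)"
      by (rule pd_sum) (auto intro!: differentiable_mult Td lower_diff Xd)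
    also have "\<dots> = (\<Sum>k\<in>UNIV. dT m k * w k + T x $ m $ k * dw k m)"
      by (rule sum.cong) (auto simp: pd_mult Td lower_diff Xd dT_def w_def dw_def)
    finally show ?thesis .
  qed
  have divV: "div_vec G (\<lambda>y. \<chi> m. \<Sum>k\<in>UNIV. T y $ m $ k * lower G X y $ k) x
     = (\<Sum>m\<in>UNIV. \<Sum>k\<in>UNIV. dT m k * w k) + (\<Sum>m\<in>UNIV. \<Sum>k\<in>UNIV. T x $ m $ k * dw k m)
       + (\<Sum>m\<in>UNIV. \<Sum>l\<in>UNIV. christoffel G m m l x * (\<Sum>k\<in>UNIV. T x $ l $ k * w k))"
    unfolding div_vec_def cd_vec_def pV by (simp add: sum.distrib w_def)
  have cdw: "cd_covec G (lower G X) m l x = dw l m - (\<Sum>k\<in>UNIV. christoffel G k m l x * w k)" for m l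
    unfolding cd_covec_def dw_def w_def ..
  have P1: "(\<Sum>k\<in>UNIV. w k * (\<Sum>m\<in>UNIV. dT m k)) = (\<Sum>m\<in>UNIV. \<Sum>k\<in>UNIV. dT m k * w k)"
    by (subst sum.swap) (simp add: sum_distrib_left algebra_simps)
  have P2: "(\<Sum>k\<in>UNIV. w k * (\<Sum>m\<in>UNIV. \<Sum>l\<in>UNIV. christoffel G m m l x * T x $ l $ k))
     = (\<Sum>m\<in>UNIV. \<Sum>l\<in>UNIV. christoffel G m m l x * (\<Sum>k\<in>UNIV. T x $ l $ k * w k))"
  proof -
    have "(\<Sum>k\<in>UNIV. w k * (\<Sum>m\<in>UNIV. \<Sum>l\<in>UNIV. christoffel G m m l x * T x $ l $ k))
       = (\<Sum>k\<in>UNIV. \<Sum>m\<in>UNIV. \<Sum>l\<in>UNIV. christoffel G m m l x * (T x $ l $ k * w k))"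
      by (simp add: sum_distrib_left algebra_simps)
    also have "\<dots> = (\<Sum>m\<in>UNIV. \<Sum>l\<in>UNIV. \<Sum>k\<in>UNIV. christoffel G m m l x * (T x $ l $ k * w k))"
      by (rule sw3)
    finally show ?thesis by (simp add: sum_distrib_left)
  qed
  have P3: "(\<Sum>k\<in>UNIV. w k * (\<Sum>m\<in>UNIV. \<Sum>l\<in>UNIV. christoffel G k m l x * T x $ m $ l))
     = (\<Sum>m\<in>UNIV. \<Sum>l\<in>UNIV. T x $ m $ l * (\<Sum>k\<in>UNIV. christoffel G k m l x * w k))"
  proof -
    have "(\<Sum>k\<in>UNIV. w k * (\<Sum>m\<in>UNIV. \<Sum>l\<in>UNIV. christoffel G k m l x * T x $ m $ l))
       = (\<Sum>k\<in>UNIV. \<Sum>m\<in>UNIV. \<Sum>l\<in>UNIV. T x $ m $ l * (christoffel G k m l x * w k))"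
      by (simp add: sum_distrib_left algebra_simps)
    also have "\<dots> = (\<Sum>m\<in>UNIV. \<Sum>l\<in>UNIV. \<Sum>k\<in>UNIV. T x $ m $ l * (christoffel G k m l x * w k))"
      by (rule sw3)
    finally show ?thesis by (simp add: sum_distrib_left)
  qed
  have L: "(\<Sum>k\<in>UNIV. lower G X x $ k * div_tensor G T k x) =
      (\<Sum>k\<in>UNIV. w k * (\<Sum>m\<in>UNIV. dT m k))
    + (\<Sum>k\<in>UNIV. w k * (\<Sum>m\<in>UNIV. \<Sum>l\<in>UNIV. christoffel G m m l x * T x $ l $ k))
    + (\<Sum>k\<in>UNIV. w k * (\<Sum>m\<in>UNIV. \<Sum>l\<in>UNIV. christoffel G k m l x * T x $ m $ l))"
    unfolding div_tensor_def w_def dT_def by (simp add: sum.distrib algebra_simps)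
  have R: "(\<Sum>m\<in>UNIV. \<Sum>l\<in>UNIV. T x $ m $ l * cd_covec G (lower G X) m l x)
     = (\<Sum>m\<in>UNIV. \<Sum>l\<in>UNIV. T x $ m $ l * dw l m)
     - (\<Sum>m\<in>UNIV. \<Sum>l\<in>UNIV. T x $ m $ l * (\<Sum>k\<in>UNIV. christoffel G k m l x * w k))"
    unfolding cdw by (simp add: sum_subtractf right_diff_distrib)
  show ?thesis unfolding L R divV P1 P2 P3 by simp
qed

lemma div_scale:
  assumes fd: "f differentiable (at x)" and Xd: "\<And>l. (\<lambda>y. X y $ l) differentiable (at x)"
  shows "div_vec G (\<lambda>y. f y *\<^sub>R X y) x = lie_fun X f x + f x * div_vec G X x"
proof -
  have "pd (\<lambda>y. (f y *\<^sub>R X y) $ m) m x = pd f m x * X x $ m + f x * pd (\<lambda>y. X y $ m) m x" for m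
    using pd_mult[OF fd Xd, of m] by simp
  thus ?thesis unfolding div_vec_def cd_vec_def lie_fun_def
    by (simp add: sum.distrib sum_distrib_left algebra_simps)
qed

lemma div_add:
  assumes Ad: "\<And>l. (\<lambda>y. A y $ l) differentiable (at x)" and Bd: "\<And>l. (\<lambda>y. B y $ l) differentiable (at x)"
  shows "div_vec G (\<lambda>y. A y + B y) x = div_vec G A x + div_vec G B x"
proof -
  have "pd (\<lambda>y. (A y + B y) $ m) m x = pd (\<lambda>y. A y $ m) m x + pd (\<lambda>y. B y $ m) m x" for m
    using pd_add[OF Ad Bd, of m] by simp
  thus ?thesis unfolding div_vec_def cd_vec_def
    by (simp add: sum.distrib algebra_simps)
qed

end

lemma lie_mult:
  assumes "f differentiable (at x)" "g differentiable (at x)"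
  shows "lie_fun X (\<lambda>y. f y * g y) x = lie_fun X f x * g x + f x * lie_fun X g x"
  unfolding lie_fun_def pd_mult[OF assms] by (simp add: sum.distrib sum_distrib_left sum_distrib_right algebra_simps)

lemma lie_add:
  assumes "f differentiable (at x)" "g differentiable (at x)"
  shows "lie_fun X (\<lambda>y. f y + g y) x = lie_fun X f x + lie_fun X g x"
  unfolding lie_fun_def pd_add[OF assms] by (simp add: sum.distrib algebra_simps)

lemma lie_comp:
  assumes "(\<phi> has_real_derivative d) (at (f x))" "f differentiable (at x)"
  shows "lie_fun X (\<lambda>y. \<phi> (f y)) x = d * lie_fun X f x"
  unfolding lie_fun_def pd_comp[OF assms] by (simp add: sum_distrib_left algebra_simps)

lemma lie_local:
  assumes "open W" "x \<in> W" "\<And>y. y \<in> W \<Longrightarrow> f y = g y"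
  shows "lie_fun X f x = lie_fun X g x"
  unfolding lie_fun_def using pd_local[OF assms] by simp

lemma lie_vf_comb:
  "lie_fun (\<lambda>y. a *\<^sub>R A y + b *\<^sub>R B y) f x = a * lie_fun A f x + b * lie_fun B f x"
  unfolding lie_fun_def by (simp add: sum.distrib sum_distrib_left algebra_simps)



lemma lie_pt:
  assumes "X x = a *\<^sub>R A x + b *\<^sub>R B x"
  shows "lie_fun X f x = a * lie_fun A f x + b * lie_fun B f x"
  unfolding lie_fun_def assms by (simp add: sum.distrib sum_distrib_left algebra_simps)

context pt begin

lemma shear_xx:
  assumes Xd: "\<And>l. (\<lambda>y. X y $ l) differentiable (at x)"
    and Yd: "\<And>l. (\<lambda>y. Y y $ l) differentiable (at x)"
    and Kc: "(\<Sum>m\<in>UNIV. \<Sum>n\<in>UNIV. Y x $ m * X x $ n * Kil X m n) = 0"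
    and D0: "lie_fun X (\<lambda>y. gdot G y (Y y) (X y)) x = 0"
  shows "(\<Sum>i\<in>UNIV. \<Sum>j\<in>UNIV. cd_covec G (lower G Y) i j x * X x $ i * X x $ j)
     = lie_fun Y (\<lambda>y. gdot G y (X y) (X y)) x / 2"
proof -
  define S1 where "S1 = (\<Sum>m\<in>UNIV. \<Sum>n\<in>UNIV. (\<Sum>l\<in>UNIV. Y x $ l * dg l m n) * X x $ m * X x $ n)"
  define S1' where "S1' = (\<Sum>m\<in>UNIV. \<Sum>n\<in>UNIV. (\<Sum>l\<in>UNIV. X x $ l * dg l m n) * Y x $ m * X x $ n)"
  have a1: "lie_fun X (\<lambda>y. gdot G y (Y y) (X y)) x = S1'
     + (\<Sum>m\<in>UNIV. \<Sum>n\<in>UNIV. g m n * DX Y X m * X x $ n)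
     + (\<Sum>m\<in>UNIV. \<Sum>n\<in>UNIV. g m n * Y x $ m * DX X X n)"
    unfolding S1'_def by (rule lie_gdot[OF Yd Xd])
  have a2: "(\<Sum>m\<in>UNIV. \<Sum>n\<in>UNIV. Y x $ m * X x $ n * Kil X m n) = S1'
     + (\<Sum>m\<in>UNIV. \<Sum>n\<in>UNIV. g m n * DX X Y m * X x $ n)
     + (\<Sum>m\<in>UNIV. \<Sum>n\<in>UNIV. g m n * Y x $ m * DX X X n)"
    unfolding S1'_def by (rule kil_contr)
  have a3: "lie_fun Y (\<lambda>y. gdot G y (X y) (X y)) x = S1
     + (\<Sum>m\<in>UNIV. \<Sum>n\<in>UNIV. g m n * DX X Y m * X x $ n)
     + (\<Sum>m\<in>UNIV. \<Sum>n\<in>UNIV. g m n * X x $ m * DX X Y n)"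
    unfolding S1_def by (rule lie_gdot[OF Xd Xd])
  have sy: "(\<Sum>m\<in>UNIV. \<Sum>n\<in>UNIV. g m n * X x $ m * DX X Y n) = (\<Sum>m\<in>UNIV. \<Sum>n\<in>UNIV. g m n * DX X Y m * X x $ n)"
    by (subst sum.swap) (simp add: gs algebra_simps)
  have eq1: "(\<Sum>m\<in>UNIV. \<Sum>n\<in>UNIV. g m n * DX Y X m * X x $ n) = (\<Sum>m\<in>UNIV. \<Sum>n\<in>UNIV. g m n * DX X Y m * X x $ n)"
    using a1 a2 Kc D0 by simp
  have c1: "(\<Sum>i\<in>UNIV. \<Sum>j\<in>UNIV. cd_covec G (lower G Y) i j x * X x $ i * X x $ j)
     = (\<Sum>i\<in>UNIV. \<Sum>j\<in>UNIV. X x $ i * X x $ j * (\<Sum>l\<in>UNIV. dg i l j * Y x $ l))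
     + (\<Sum>i\<in>UNIV. \<Sum>j\<in>UNIV. X x $ i * X x $ j * (\<Sum>l\<in>UNIV. g j l * pd (\<lambda>y. Y y $ l) i x))
     - (\<Sum>i\<in>UNIV. \<Sum>j\<in>UNIV. X x $ i * X x $ j * (\<Sum>l\<in>UNIV. Y x $ l * dg i l j)) / 2
     - (\<Sum>i\<in>UNIV. \<Sum>j\<in>UNIV. X x $ i * X x $ j * (\<Sum>l\<in>UNIV. Y x $ l * dg j l i)) / 2
     + (\<Sum>i\<in>UNIV. \<Sum>j\<in>UNIV. X x $ i * X x $ j * (\<Sum>l\<in>UNIV. Y x $ l * dg l i j)) / 2"
  proof -
    have pw: "cd_covec G (lower G Y) i j x * X x $ i * X x $ j =
        X x $ i * X x $ j * (\<Sum>l\<in>UNIV. dg i l j * Y x $ l)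
      + X x $ i * X x $ j * (\<Sum>l\<in>UNIV. g j l * pd (\<lambda>y. Y y $ l) i x)
      - X x $ i * X x $ j * (\<Sum>l\<in>UNIV. Y x $ l * dg i l j) / 2
      - X x $ i * X x $ j * (\<Sum>l\<in>UNIV. Y x $ l * dg j l i) / 2
      + X x $ i * X x $ j * (\<Sum>l\<in>UNIV. Y x $ l * dg l i j) / 2" for i j
    proof -
      have h1: "(\<Sum>l\<in>UNIV. Y x $ l * (dg i l j + dg j l i - dg l i j) / 2)
         = (\<Sum>l\<in>UNIV. Y x $ l * dg i l j) / 2 + (\<Sum>l\<in>UNIV. Y x $ l * dg j l i) / 2
           - (\<Sum>l\<in>UNIV. Y x $ l * dg l i j) / 2"
        by (simp add: sum.distrib sum_subtractf sum_divide_distrib[symmetric] ring_distribs diff_divide_distrib add_divide_distrib)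
      have h2: "(\<Sum>l\<in>UNIV. dg i j l * Y x $ l + g j l * pd (\<lambda>y. Y y $ l) i x)
         = (\<Sum>l\<in>UNIV. dg i l j * Y x $ l) + (\<Sum>l\<in>UNIV. g j l * pd (\<lambda>y. Y y $ l) i x)"
        by (simp add: sum.distrib dgs)
      show ?thesis unfolding cd_lower[OF Yd] h1 h2 by (simp add: algebra_simps)
    qed
    show ?thesis unfolding pw by (simp add: sum.distrib sum_subtractf sum_divide_distrib[symmetric])
  qed
  have c2: "(\<Sum>i\<in>UNIV. \<Sum>j\<in>UNIV. X x $ i * X x $ j * (\<Sum>l\<in>UNIV. Y x $ l * dg j l i))
     = (\<Sum>i\<in>UNIV. \<Sum>j\<in>UNIV. X x $ i * X x $ j * (\<Sum>l\<in>UNIV. Y x $ l * dg i l j))"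
    by (subst sum.swap) (simp add: algebra_simps)
  have c3: "(\<Sum>i\<in>UNIV. \<Sum>j\<in>UNIV. X x $ i * X x $ j * (\<Sum>l\<in>UNIV. dg i l j * Y x $ l))
     = (\<Sum>i\<in>UNIV. \<Sum>j\<in>UNIV. X x $ i * X x $ j * (\<Sum>l\<in>UNIV. Y x $ l * dg i l j))"
    by (simp add: algebra_simps)
  have c4: "(\<Sum>i\<in>UNIV. \<Sum>j\<in>UNIV. X x $ i * X x $ j * (\<Sum>l\<in>UNIV. g j l * pd (\<lambda>y. Y y $ l) i x))
     = (\<Sum>m\<in>UNIV. \<Sum>n\<in>UNIV. g m n * DX Y X m * X x $ n)"
  proof -
    have "(\<Sum>i\<in>UNIV. \<Sum>j\<in>UNIV. X x $ i * X x $ j * (\<Sum>l\<in>UNIV. g j l * pd (\<lambda>y. Y y $ l) i x))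
       = (\<Sum>i\<in>UNIV. \<Sum>j\<in>UNIV. \<Sum>l\<in>UNIV. X x $ i * X x $ j * (g j l * pd (\<lambda>y. Y y $ l) i x))"
      by (simp add: sum_distrib_left)
    also have "\<dots> = (\<Sum>j\<in>UNIV. \<Sum>l\<in>UNIV. \<Sum>i\<in>UNIV. X x $ i * X x $ j * (g j l * pd (\<lambda>y. Y y $ l) i x))"
      by (rule sw3)
    also have "\<dots> = (\<Sum>l\<in>UNIV. \<Sum>j\<in>UNIV. \<Sum>i\<in>UNIV. X x $ i * X x $ j * (g j l * pd (\<lambda>y. Y y $ l) i x))"
      by (rule sum.swap)
    also have "\<dots> = (\<Sum>m\<in>UNIV. \<Sum>n\<in>UNIV. g m n * DX Y X m * X x $ n)"
      unfolding DX_def by (simp add: sum_distrib_left sum_distrib_right gs algebra_simps)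
    finally show ?thesis .
  qed
  have c5: "(\<Sum>i\<in>UNIV. \<Sum>j\<in>UNIV. X x $ i * X x $ j * (\<Sum>l\<in>UNIV. Y x $ l * dg l i j)) = S1"
    unfolding S1_def by (simp add: sum_distrib_left sum_distrib_right algebra_simps)
  show ?thesis unfolding c1 c2 c3 c4 c5 a3 sy eq1 by simp
qed

end


lemma eos_c:
  assumes eos: "radiation_eos d H" and d: "d > 0" and P: "P > 0" and sg: "\<sigma> > 0"
  shows "eos_hP H P \<sigma> * H P \<sigma> powr d = (H 2 \<sigma> powr (d+1) - H 1 \<sigma> powr (d+1)) / (d+1)"
proof -
  define f where "f q = H q \<sigma>" for q
  define f' where "f' q = eos_hP H q \<sigma>" for q
  define f'' where "f'' q = deriv f' q" for q
  have E: "q > 0 \<Longrightarrow> f q > 0 \<and> f' q > 0 \<and> f differentiable (at q) \<and> f' differentiable (at q) \<and>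
      sound_speed_sq H q \<sigma> = 1 / d" for q
    using eos sg unfolding radiation_eos_def f_def f'_def by blast
  have Df: "q > 0 \<Longrightarrow> DERIV f q :> f' q" for q
    using E[of q] DERIV_deriv_iff_real_differentiable unfolding f'_def eos_hP_def f_def by blast
  have Df': "q > 0 \<Longrightarrow> DERIV f' q :> f'' q" for q
    using E[of q] DERIV_deriv_iff_real_differentiable unfolding f''_def by blast
  have key: "f q * f'' q = - d * (f' q)\<^sup>2" if q: "q > 0" for q
  proof -
    have fq: "f q > 0" "f' q > 0" using E[OF q] by auto
    have d1: "DERIV (\<lambda>q. ln (f q)) q :> 1 / f q * f' q"
      by (rule DERIV_chain2[OF DERIV_ln_divide[OF fq(1)] Df[OF q]])
    have d2': "DERIV (\<lambda>q. inverse (f' q)) q :> - (f'' q * inverse (f' q ^ 2))"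
      using DERIV_inverse_fun[OF Df'[OF q]] fq by (simp add: numeral_2_eq_2)
    have d2: "DERIV (\<lambda>q. ln (eos_n H q \<sigma>)) q :> 1 / inverse (f' q) * (- (f'' q * inverse (f' q ^ 2)))"
    proof -
      have "(\<lambda>q. ln (eos_n H q \<sigma>)) = (\<lambda>q. ln (inverse (f' q)))"
        unfolding eos_n_def f'_def by (simp add: inverse_eq_divide)
      moreover have "DERIV (\<lambda>q. ln (inverse (f' q))) q :> 1 / inverse (f' q) * (- (f'' q * inverse (f' q ^ 2)))"
        by (rule DERIV_chain2[OF DERIV_ln_divide d2']) (use fq in simp)
      ultimately show ?thesis by simp
    qed
    have e1: "deriv (\<lambda>q. ln (H q \<sigma>)) q = f' q / f q"
      using DERIV_imp_deriv[OF d1] unfolding f_def by simp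
    have e2: "deriv (\<lambda>q. ln (eos_n H q \<sigma>)) q = - f'' q / f' q"
      using DERIV_imp_deriv[OF d2] fq by (simp add: field_simps power2_eq_square)
    have ss: "sound_speed_sq H q \<sigma> = (f' q / f q) / (- f'' q / f' q)"
      unfolding sound_speed_sq_def e1 e2 ..
    have "(f' q / f q) / (- f'' q / f' q) = 1 / d" using E[OF q] ss by simp
    moreover have "f'' q \<noteq> 0"
    proof
      assume "f'' q = 0"
      with \<open>(f' q / f q) / (- f'' q / f' q) = 1 / d\<close> d show False by simp
    qed
    ultimately show ?thesis using fq d by (simp add: field_simps power2_eq_square)
  qed
  define \<phi> where "\<phi> q = f' q * f q powr d" for q
  have Dphi: "DERIV \<phi> q :> 0" if q: "q > 0" for q
  proof -
    have fq: "f q > 0" "f' q > 0" using E[OF q] by auto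
    have "DERIV \<phi> q :> f'' q * f q powr d + (d * f q powr (d - 1) * f' q) * f' q"
      unfolding \<phi>_def using DERIV_mult[OF Df'[OF q] DERIV_fun_powr[OF Df[OF q] fq(1), of d]] by simp
    moreover have "f'' q * f q powr d + (d * f q powr (d - 1) * f' q) * f' q = 0"
    proof -
      have "f q powr d = f q powr (d - 1) * f q" using fq by (simp add: powr_diff)
      hence "f'' q * f q powr d + (d * f q powr (d - 1) * f' q) * f' q
          = f q powr (d - 1) * (f q * f'' q + d * (f' q)\<^sup>2)" by (simp add: algebra_simps power2_eq_square)
      thus ?thesis using key[OF q] by simp
    qed
    ultimately show ?thesis by simp
  qed
  have phic: "\<phi> q = \<phi> P" if q: "q > 0" for q
    by (rule DERIV_isconst3[of 0 "max q P + 1"]) (use q P Dphi in auto)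
  define \<psi> where "\<psi> q = f q powr (d + 1) - (d + 1) * \<phi> P * q" for q
  have Dpsi: "DERIV \<psi> q :> 0" if q: "q > 0" for q
  proof -
    have fq: "f q > 0" using E[OF q] by auto
    have "DERIV \<psi> q :> (d + 1) * f q powr (d + 1 - 1) * f' q - (d + 1) * \<phi> P"
      unfolding \<psi>_def
      using DERIV_diff[OF DERIV_fun_powr[OF Df[OF q] fq, of "d+1"] DERIV_cmult[OF DERIV_ident, of "(d+1) * \<phi> P"]]
      by simp
    moreover have "(d + 1) * f q powr (d + 1 - 1) * f' q - (d + 1) * \<phi> P = 0"
      using phic[OF q] d unfolding \<phi>_def by (simp add: algebra_simps)
    ultimately show ?thesis by metis
  qed
  have "\<psi> 2 = \<psi> 1"
    by (rule DERIV_isconst3[of 0 3]) (use Dpsi in auto)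
  hence "\<phi> P = (f 2 powr (d+1) - f 1 powr (d+1)) / (d+1)"
    unfolding \<psi>_def using d by (simp add: field_simps)
  thus ?thesis unfolding \<phi>_def f_def f'_def .
qed



definition D2 :: "(real^'n) set \<Rightarrow> (real^'n \<Rightarrow> real) \<Rightarrow> bool" where
  "D2 W f = (\<forall>y\<in>W. f differentiable (at y) \<and> (\<forall>i. pd f i differentiable (at y)))"

lemma D2_Ck2: "Ck 2 U f \<Longrightarrow> D2 U f"
  unfolding D2_def by (simp add: numeral_2_eq_2)

lemma Ck_le: "Ck k U f \<Longrightarrow> j \<le> k \<Longrightarrow> Ck j U f"
proof (induction k arbitrary: j f)
  case 0 thus ?case by simp
next
  case (Suc k)
  show ?case
  proof (cases j)
    case 0
    have "\<forall>x\<in>U. f differentiable (at x)" using Suc.prems by simp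
    hence "continuous_on U f"
      by (meson continuous_at_imp_continuous_on differentiable_imp_continuous_within)
    thus ?thesis using 0 by simp
  next
    case (Suc j')
    thus ?thesis using Suc.prems Suc.IH by auto
  qed
qed

lemma smooth_D2: "smooth_on U f \<Longrightarrow> D2 U f"
  unfolding smooth_on_def by (rule D2_Ck2) blast

lemma D2_diff: "D2 W f \<Longrightarrow> y \<in> W \<Longrightarrow> f differentiable (at y)"
  unfolding D2_def by blast

lemma D2_pd_diff: "D2 W f \<Longrightarrow> y \<in> W \<Longrightarrow> pd f i differentiable (at y)"
  unfolding D2_def by blast




lemma D2_const: "D2 W (\<lambda>y. c)"
proof -
  have e: "pd (\<lambda>y. c) i = (\<lambda>y. 0)" for i by (rule ext) simp
  show ?thesis unfolding D2_def e by simp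
qed

lemma D2_sub: "D2 W f \<Longrightarrow> V \<subseteq> W \<Longrightarrow> D2 V f"
  unfolding D2_def by blast

lemma D2_local:
  assumes "D2 W f" "open W" "\<And>y. y \<in> W \<Longrightarrow> f y = g y"
  shows "D2 W g"
  unfolding D2_def
proof (intro ballI conjI allI)
  fix y i assume y: "y \<in> W"
  show "g differentiable (at y)" by (rule diff_local[OF assms(2) y assms(3) D2_diff[OF assms(1) y]])
  have e: "\<And>z. z \<in> W \<Longrightarrow> pd f i z = pd g i z" by (rule pd_local[OF assms(2) _ assms(3)])
  show "pd g i differentiable (at y)" by (rule diff_local[OF assms(2) y e D2_pd_diff[OF assms(1) y]])
qed



lemma D2_add:
  assumes "D2 W f" "D2 W g" "open W"
  shows "D2 W (\<lambda>y. f y + g y)"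
  unfolding D2_def
proof (intro ballI conjI allI)
  fix y i assume y: "y \<in> W"
  show "(\<lambda>y. f y + g y) differentiable (at y)"
    using D2_diff[OF assms(1) y] D2_diff[OF assms(2) y] by (rule differentiable_add)
  have e: "\<And>z. z \<in> W \<Longrightarrow> pd f i z + pd g i z = pd (\<lambda>y. f y + g y) i z"
    by (rule pd_add[symmetric, OF D2_diff[OF assms(1)] D2_diff[OF assms(2)]])
  have dd: "(\<lambda>z. pd f i z + pd g i z) differentiable (at y)"
    using D2_pd_diff[OF assms(1) y] D2_pd_diff[OF assms(2) y] by (rule differentiable_add)
  show "pd (\<lambda>y. f y + g y) i differentiable (at y)" using diff_local[OF assms(3) y e dd] by simp
qed

lemma D2_mult:
  assumes "D2 W f" "D2 W g" "open W"
  shows "D2 W (\<lambda>y. f y * g y)"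
  unfolding D2_def
proof (intro ballI conjI allI)
  fix y i assume y: "y \<in> W"
  show "(\<lambda>y. f y * g y) differentiable (at y)"
    using D2_diff[OF assms(1) y] D2_diff[OF assms(2) y] by (rule differentiable_mult)
  have e: "\<And>z. z \<in> W \<Longrightarrow> pd f i z * g z + f z * pd g i z = pd (\<lambda>y. f y * g y) i z"
    by (rule pd_mult[symmetric, OF D2_diff[OF assms(1)] D2_diff[OF assms(2)]])
  have dd: "(\<lambda>z. pd f i z * g z + f z * pd g i z) differentiable (at y)"
    using D2_pd_diff[OF assms(1) y] D2_pd_diff[OF assms(2) y] D2_diff[OF assms(1) y] D2_diff[OF assms(2) y]
    by (intro differentiable_add differentiable_mult)
  show "pd (\<lambda>y. f y * g y) i differentiable (at y)" using diff_local[OF assms(3) y e dd] by simp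
qed

lemma D2_sum:
  assumes "finite S" "\<And>l. l \<in> S \<Longrightarrow> D2 W (f l)" "open W"
  shows "D2 W (\<lambda>y. \<Sum>l\<in>S. f l y)"
  using assms(1,2)
proof (induction S rule: finite_induct)
  case empty thus ?case using D2_const[of W 0] by simp
next
  case (insert a S)
  have "D2 W (\<lambda>y. f a y + (\<Sum>l\<in>S. f l y))"
    by (rule D2_add) (use insert assms(3) in auto)
  thus ?case using insert by simp
qed

lemma D2_comp:
  assumes "D2 W f" "open W"
    and "\<And>y. y \<in> W \<Longrightarrow> (\<phi> has_real_derivative \<phi>' (f y)) (at (f y))"
    and "\<And>y. y \<in> W \<Longrightarrow> \<phi>' differentiable (at (f y))"
  shows "D2 W (\<lambda>y. \<phi> (f y))"
  unfolding D2_def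
proof (intro ballI conjI allI)
  fix y i assume y: "y \<in> W"
  show "(\<lambda>y. \<phi> (f y)) differentiable (at y)" by (rule diff_comp[OF assms(3)[OF y] D2_diff[OF assms(1) y]])
  have e: "\<And>z. z \<in> W \<Longrightarrow> \<phi>' (f z) * pd f i z = pd (\<lambda>y. \<phi> (f y)) i z"
    by (rule pd_comp[symmetric, OF assms(3) D2_diff[OF assms(1)]])
  have dd: "(\<lambda>z. \<phi>' (f z) * pd f i z) differentiable (at y)"
  proof (rule differentiable_mult)
    show "(\<lambda>z. \<phi>' (f z)) differentiable (at y)"
      using differentiable_chain_at[OF D2_diff[OF assms(1) y] assms(4)[OF y]] by (simp add: o_def)
    show "pd f i differentiable (at y)" using D2_pd_diff[OF assms(1) y] .
  qed
  show "pd (\<lambda>y. \<phi> (f y)) i differentiable (at y)" using diff_local[OF assms(2) y e dd] by simp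
qed



lemma D2_sqrt:
  assumes "D2 W f" "open W" "\<And>y. y \<in> W \<Longrightarrow> f y > 0"
  shows "D2 W (\<lambda>y. sqrt (f y))"
proof (rule D2_comp[OF assms(1,2), of sqrt "\<lambda>t. inverse (sqrt t) / 2"])
  fix y assume y: "y \<in> W"
  show "(sqrt has_real_derivative inverse (sqrt (f y)) / 2) (at (f y))"
    using DERIV_real_sqrt[OF assms(3)[OF y]] .
  have "DERIV (\<lambda>t. inverse (sqrt t)) (f y) :> - (inverse (sqrt (f y)) / 2 * inverse (sqrt (f y) ^ Suc (Suc 0)))"
    by (rule DERIV_inverse_fun[OF DERIV_real_sqrt]) (use assms(3)[OF y] in auto)
  from DERIV_cdivide[OF this, of 2]
  show "(\<lambda>t. inverse (sqrt t) / 2) differentiable (at (f y))"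
    using real_differentiable_def by blast
qed

lemma D2_inverse:
  assumes "D2 W f" "open W" "\<And>y. y \<in> W \<Longrightarrow> f y \<noteq> 0"
  shows "D2 W (\<lambda>y. inverse (f y))"
proof (rule D2_comp[OF assms(1,2), of inverse "\<lambda>t. - (inverse t ^ Suc (Suc 0))"])
  fix y assume y: "y \<in> W"
  show "(inverse has_real_derivative - (inverse (f y) ^ Suc (Suc 0))) (at (f y))"
    using DERIV_inverse[OF assms(3)[OF y]] .
  have "DERIV (\<lambda>t. inverse t ^ Suc (Suc 0)) (f y) :> of_nat (Suc (Suc 0)) * ((- (inverse (f y) ^ Suc (Suc 0))) * inverse (f y) ^ (Suc (Suc 0) - Suc 0))"
    by (rule DERIV_power[OF DERIV_inverse[OF assms(3)[OF y]]])
  from DERIV_minus[OF this]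
  show "(\<lambda>t. - (inverse t ^ Suc (Suc 0))) differentiable (at (f y))"
    using real_differentiable_def by blast
qed



lemma final_alg:
  fixes d r E v n h b A DQ DE Dh Dn Db Dr \<Theta> :: real
  assumes d: "d > 0" and r: "r > 0" and E: "E \<noteq> 0" and v: "0 < v" "v < 1" and n: "n > 0" and h: "h > 0"
    and e1: "Dh * E + h * DE = 0"
    and e2: "Dn = d * n / h * Dh"
    and e3: "Db + b * \<Theta> = 0"
    and e4: "Db * r + b * Dr = - (Dn * v * E + n * A * E + n * v * DE)"
    and e5: "b * r = - (n * v * E)"
    and e6: "Dr = - DQ / (2 * r)"
    and e7: "2 * E * DE * (1 - v\<^sup>2) + E\<^sup>2 * (- 2 * v * A) = - DQ"
    and e8: "E\<^sup>2 * (1 - v\<^sup>2) = r\<^sup>2"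
  shows "\<Theta> / d + DQ / (2 * r\<^sup>2) = (v\<^sup>2 - 1 / d) / (v * (1 - v\<^sup>2)) * A"
proof -
  have "v * v < 1 * 1" using v by (intro mult_strict_mono) auto
  hence v2: "1 - v\<^sup>2 > 0" by (simp add: power2_eq_square)
  have b0: "b \<noteq> 0" using e5 r n v E by auto
  have bb: "b = - (n * v * E) / r" using e5 r by (simp add: field_simps)
  have th: "\<Theta> = - Db / b" using e3 b0 by (simp add: field_simps)
  have Db: "Db = (- (Dn * v * E + n * A * E + n * v * DE) - b * Dr) / r" using e4 r by (simp add: field_simps)
  have th2: "\<Theta> = - (Dn / n + A / v + DE / E) + Dr / r"
    unfolding th Db bb using r n v E by (simp add: field_simps)
  have dn: "Dn / n = - d * (DE / E)"
  proof -
    have dh: "Dh = - h * DE / E" using e1 E by (simp add: field_simps)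
    have "Dn = d * n / h * (- h * DE / E)" using e2 dh by simp
    also have "\<dots> = - d * n * DE / E" using h by (simp add: field_simps)
    finally show ?thesis using n by (simp add: field_simps)
  qed
  have E2: "E\<^sup>2 = r\<^sup>2 / (1 - v\<^sup>2)" using e8 v2 by (simp add: field_simps)
  have de: "DE / E = - DQ / (2 * r\<^sup>2) + v * A / (1 - v\<^sup>2)"
  proof -
    have x: "2 * E * DE * (1 - v\<^sup>2) = - DQ + 2 * E\<^sup>2 * v * A" using e7 by (simp add: algebra_simps)
    have "DE / E = (DE * (2 * E * (1 - v\<^sup>2))) / (E * (2 * E * (1 - v\<^sup>2)))"
      using E v2 by simp
    also have "\<dots> = (- DQ + 2 * E\<^sup>2 * v * A) / (2 * E\<^sup>2 * (1 - v\<^sup>2))"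
      using x by (simp add: power2_eq_square algebra_simps)
    also have "\<dots> = (- DQ + 2 * E\<^sup>2 * v * A) / (2 * r\<^sup>2)" using e8 by (simp add: mult.assoc)
    also have "\<dots> = - DQ / (2 * r\<^sup>2) + v * A / (1 - v\<^sup>2)"
      unfolding E2 using v2 r by (simp add: field_simps)
    finally show ?thesis .
  qed
  have dr: "Dr / r = - DQ / (2 * r\<^sup>2)" using e6 r by (simp add: field_simps power2_eq_square)
  define K where "K = DQ / (2 * r\<^sup>2)"
  define Y where "Y = v * A / (1 - v\<^sup>2)"
  have de': "DE / E = - K + Y" unfolding K_def Y_def de by simp
  have dr': "Dr / r = - K" unfolding K_def dr by simp
  have "\<Theta> = - (- d * (DE / E) + A / v + DE / E) + Dr / r" using th2 dn by simp
  also have "\<dots> = - (- d * (- K + Y) + A / v + (- K + Y)) + (- K)" by (simp only: de' dr')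
  also have "\<dots> = (d - 1) * (- K + Y) - A / v - K" by (simp add: algebra_simps)
  finally have "\<Theta> = (d - 1) * (- K + Y) - A / v - K" .
  hence "\<Theta> / d + K = ((d - 1) * Y - A / v) / d" using d by (simp add: field_simps)
  also have "\<dots> = (v\<^sup>2 - 1 / d) / (v * (1 - v\<^sup>2)) * A"
    unfolding Y_def using d v v2 by (simp add: field_simps power2_eq_square)
  finally show ?thesis unfolding K_def .
qed



locale fl =
  fixes G :: "real^'n \<Rightarrow> real^'n^'n"
    and U :: "(real^'n) set" and p :: "real^'n"
    and H :: "real \<Rightarrow> real \<Rightarrow> real"
    and n h P s T v :: "real^'n \<Rightarrow> real"
    and u \<xi> \<eta> :: "real^'n \<Rightarrow> real^'n"
    and \<sigma> \<omega> :: "real^'n \<Rightarrow> real^'n^'n"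
    and d :: real and \<xi>b acc :: "real^'n \<Rightarrow> real^'n"
  assumes d_def: "d = real CARD('n) - 1"
    and \<xi>b_def: "\<xi>b = (\<lambda>x. (1 / sqrt \<bar>gdot G x (\<xi> x) (\<xi> x)\<bar>) *\<^sub>R \<xi> x)"
    and acc_def: "acc = (\<lambda>x. \<chi> k. \<Sum>m\<in>UNIV. \<eta> x $ m * cd_vec G \<eta> m k x)"
  assumes dim: "CARD('n) \<ge> 2"
    and U_open: "open U" and pU: "p \<in> U"
    and metric_smooth: "\<forall>i j. smooth_on U (\<lambda>x. G x $ i $ j)"
    and metric_lorentz: "\<forall>x\<in>U. lorentzian_matrix (G x)"
    and xi_smooth: "\<forall>i. smooth_on U (\<lambda>x. \<xi> x $ i)"
    and xi_killing: "killing_on G \<xi> U"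
    and xi_timelike: "\<forall>x\<in>U. gdot G x (\<xi> x) (\<xi> x) < 0"
    and eos: "radiation_eos d H"
    and fluid: "perfect_fluid_on G U H n h P s T u"
    and C2: "Ck 2 U n" "Ck 2 U h" "Ck 2 U P" "Ck 2 U s" "Ck 2 U T" "\<forall>i. Ck 2 U (\<lambda>x. u x $ i)"
    and steady: "\<forall>x\<in>U. lie_fun \<xi> P x = 0 \<and> lie_fun \<xi> s x = 0 \<and> lie_vec \<xi> u x = 0"
    and decomp_u: "\<forall>x\<in>U. 0 \<le> v x \<and> v x < 1 \<and>
                     u x = (1 / sqrt (1 - (v x)\<^sup>2)) *\<^sub>R (\<xi>b x + v x *\<^sub>R \<eta> x)"
    and eta_unit: "\<forall>x\<in>U. gdot G x (\<eta> x) (\<eta> x) = 1 \<and> gdot G x (\<xi>b x) (\<eta> x) = 0"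
    and eta_inv: "\<forall>x\<in>U. lie_vec \<xi> \<eta> x = 0"
    and shear_decomp: "\<forall>x\<in>U. \<forall>i j.
          cd_covec G (lower G \<eta>) i j x - lower G \<eta> x $ i * lower G acc x $ j
            = div_vec G \<eta> x / d * (G x $ i $ j - lower G \<eta> x $ i * lower G \<eta> x $ j)
              + \<sigma> x $ i $ j + \<omega> x $ i $ j"
    and sigma_sym: "\<forall>x\<in>U. \<forall>i j. \<sigma> x $ i $ j = \<sigma> x $ j $ i"
    and sigma_tracefree: "\<forall>x\<in>U. (\<Sum>i\<in>UNIV. \<Sum>j\<in>UNIV. ginv G x $ i $ j * \<sigma> x $ i $ j) = 0"
    and omega_antisym: "\<forall>x\<in>U. \<forall>i j. \<omega> x $ i $ j = - \<omega> x $ j $ i"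
    and sonic: "v p = 1 / sqrt d"
begin

lemma d_ge1: "d \<ge> 1" using dim unfolding d_def by simp

lemma G_D2: "D2 U (\<lambda>y. G y $ i $ j)" using metric_smooth smooth_D2 by blast
lemma xi_D2: "D2 U (\<lambda>y. \<xi> y $ i)" using xi_smooth smooth_D2 by blast
lemma u_D2: "D2 U (\<lambda>y. u y $ i)" using C2(6) D2_Ck2 by blast
lemma n_D2: "D2 U n" using C2(1) D2_Ck2 by blast
lemma h_D2: "D2 U h" using C2(2) D2_Ck2 by blast
lemma P_D2: "D2 U P" using C2(3) D2_Ck2 by blast
lemma s_D2: "D2 U s" using C2(4) D2_Ck2 by blast
lemma T_D2: "D2 U T" using C2(5) D2_Ck2 by blast

lemma gsU: "x \<in> U \<Longrightarrow> G x $ i $ j = G x $ j $ i"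
proof -
  assume x: "x \<in> U"
  have "transpose (G x) = G x" using metric_lorentz x unfolding lorentzian_matrix_def by blast
  hence "transpose (G x) $ j $ i = G x $ j $ i" by simp
  thus ?thesis unfolding transpose_def by simp
qed

lemma invU: "x \<in> U \<Longrightarrow> invertible (G x)"
  using metric_lorentz lor_invertible by blast

lemma ptU: "x \<in> U \<Longrightarrow> pt G x"
proof (unfold_locales)
  assume x: "x \<in> U"
  show "\<And>i j. (\<lambda>y. G y $ i $ j) differentiable (at x)" using G_D2 D2_diff x by blast
  show "\<And>i j. G x $ i $ j = G x $ j $ i" using gsU x by blast
  show "invertible (G x)" using invU x .
  fix k i j
  show "pd (\<lambda>y. G y $ i $ j) k x = pd (\<lambda>y. G y $ j $ i) k x"
    by (rule pd_local[OF U_open x]) (simp add: gsU)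
qed

lemma ginv_diff:
  assumes x: "x \<in> U" shows "(\<lambda>y. ginv G y $ k $ j) differentiable (at x)"
proof -
  have e: "\<And>y. y \<in> U \<Longrightarrow> det (\<chi> a c. if c = k then (if a = j then 1 else 0) else G y $ a $ c) / det (G y) = ginv G y $ k $ j"
    unfolding ginv_def using inv_entry[OF invU] by simp
  have Gd: "\<And>a c. (\<lambda>y. G y $ a $ c) differentiable (at x)" using G_D2 D2_diff x by blast
  have d1: "(\<lambda>y. det (\<chi> a c. if c = k then (if a = j then 1 else 0) else G y $ a $ c)) differentiable (at x)"
  proof (rule det_differentiable)
    fix a c
    show "(\<lambda>y. (\<chi> a c. if c = k then (if a = j then 1 else 0) else G y $ a $ c) $ a $ c) differentiable (at x)"
      by (cases "c = k") (simp_all add: Gd)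
  qed
  have d2: "(\<lambda>y. det (G y)) differentiable (at x)"
    by (rule det_differentiable) (simp add: Gd)
  have nz: "det (G x) \<noteq> 0" using invU[OF x] by (simp add: invertible_det_nz)
  have dd: "(\<lambda>y. det (\<chi> a c. if c = k then (if a = j then 1 else 0) else G y $ a $ c) / det (G y)) differentiable (at x)"
    using d1 d2 nz by (intro differentiable_divide) auto
  show ?thesis using diff_local[OF U_open x e dd] .
qed

end


lemma gdot_scaleL: "gdot G x (a *\<^sub>R X) Y = a * gdot G x X Y"
  unfolding gdot_def by (simp add: sum_distrib_left algebra_simps)
lemma gdot_scaleR: "gdot G x X (a *\<^sub>R Y) = a * gdot G x X Y"
  unfolding gdot_def by (simp add: sum_distrib_left algebra_simps)
lemma gdot_addL: "gdot G x (X + Z) Y = gdot G x X Y + gdot G x Z Y"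
  unfolding gdot_def by (simp add: sum.distrib algebra_simps)
lemma gdot_addR: "gdot G x X (Y + Z) = gdot G x X Y + gdot G x X Z"
  unfolding gdot_def by (simp add: sum.distrib algebra_simps)
lemma gdot_symm: assumes "\<And>i j. G x $ i $ j = G x $ j $ i" shows "gdot G x X Y = gdot G x Y X"
  unfolding gdot_def by (subst sum.swap) (simp add: assms algebra_simps)

context fl begin

definition "Q y = gdot G y (\<xi> y) (\<xi> y)"
definition "E y = gdot G y (u y) (\<xi> y)"
definition "R y = sqrt (- Q y)"
definition "gm y = 1 / sqrt (1 - (v y)\<^sup>2)"

lemma QU: "x \<in> U \<Longrightarrow> Q x < 0" using xi_timelike unfolding Q_def by blast
lemma RU: assumes x: "x \<in> U" shows "R x > 0" "(R x)\<^sup>2 = - Q x"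
  using QU[OF x] unfolding R_def by auto
lemma vU: "x \<in> U \<Longrightarrow> 0 \<le> v x" "x \<in> U \<Longrightarrow> v x < 1" using decomp_u by auto
lemma v2U: "x \<in> U \<Longrightarrow> 1 - (v x)\<^sup>2 > 0"
proof -
  assume x: "x \<in> U"
  have "v x * v x < 1 * 1" using vU[OF x] by (intro mult_strict_mono') auto
  thus ?thesis by (simp add: power2_eq_square)
qed
lemma gmU: assumes x: "x \<in> U" shows "gm x > 0" "(gm x)\<^sup>2 * (1 - (v x)\<^sup>2) = 1"
  using v2U[OF x] unfolding gm_def by (auto simp: power_divide)
lemma xibU: assumes x: "x \<in> U" shows "\<xi>b x = (1 / R x) *\<^sub>R \<xi> x"
proof -
  have "\<bar>gdot G x (\<xi> x) (\<xi> x)\<bar> = - gdot G x (\<xi> x) (\<xi> x)" using xi_timelike x by auto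
  thus ?thesis unfolding \<xi>b_def R_def Q_def by simp
qed
lemma xiU: assumes x: "x \<in> U" shows "\<xi> x = R x *\<^sub>R \<xi>b x"
  using xibU[OF x] RU[OF x] by simp
lemma uU: "x \<in> U \<Longrightarrow> u x = gm x *\<^sub>R (\<xi>b x + v x *\<^sub>R \<eta> x)"
  using decomp_u unfolding gm_def by blast

lemma symU: "x \<in> U \<Longrightarrow> gdot G x X Y = gdot G x Y X"
  by (rule gdot_symm) (rule gsU)

lemma xibxib: "x \<in> U \<Longrightarrow> gdot G x (\<xi>b x) (\<xi>b x) = -1"
proof -
  assume x: "x \<in> U"
  have "gdot G x (\<xi>b x) (\<xi>b x) = (1 / R x) * (1 / R x) * Q x"
    unfolding xibU[OF x] gdot_scaleL gdot_scaleR Q_def by simp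
  also have "\<dots> = Q x / (R x)\<^sup>2" by (simp add: power2_eq_square)
  also have "\<dots> = -1" using RU[OF x] QU[OF x] by simp
  finally show ?thesis .
qed

lemma xibeta: "x \<in> U \<Longrightarrow> gdot G x (\<xi>b x) (\<eta> x) = 0" "x \<in> U \<Longrightarrow> gdot G x (\<eta> x) (\<xi>b x) = 0"
  using eta_unit symU by auto
lemma xieta: "x \<in> U \<Longrightarrow> gdot G x (\<xi> x) (\<eta> x) = 0" "x \<in> U \<Longrightarrow> gdot G x (\<eta> x) (\<xi> x) = 0"
  using xibeta xiU by (auto simp: gdot_scaleL gdot_scaleR)

lemma uxib: "x \<in> U \<Longrightarrow> gdot G x (u x) (\<xi>b x) = - gm x"
  unfolding uU by (simp add: gdot_scaleL gdot_addL xibxib xibeta)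

lemma EU: "x \<in> U \<Longrightarrow> E x = - gm x * R x"
  unfolding E_def using uxib by (simp add: xiU gdot_scaleR)

lemma EnegU: "x \<in> U \<Longrightarrow> E x < 0" using EU gmU RU by (simp add: mult_pos_pos)

lemma E2U: "x \<in> U \<Longrightarrow> (E x)\<^sup>2 * (1 - (v x)\<^sup>2) = - Q x"
proof -
  assume x: "x \<in> U"
  have "(E x)\<^sup>2 * (1 - (v x)\<^sup>2) = ((gm x)\<^sup>2 * (1 - (v x)\<^sup>2)) * (R x)\<^sup>2"
    unfolding EU[OF x] by (simp add: power_mult_distrib algebra_simps)
  thus ?thesis using gmU[OF x] RU[OF x] by simp
qed

lemma u_decomp: "x \<in> U \<Longrightarrow> u x = (E x / Q x) *\<^sub>R \<xi> x + (gm x * v x) *\<^sub>R \<eta> x"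
proof -
  assume x: "x \<in> U"
  have "E x / Q x = gm x / R x"
    unfolding EU[OF x] using RU[OF x] QU[OF x] by (simp add: field_simps power2_eq_square)
  thus ?thesis unfolding uU[OF x] xibU[OF x] by (simp add: scaleR_add_right)
qed

lemma uu: "x \<in> U \<Longrightarrow> gdot G x (u x) (u x) = -1" using fluid unfolding perfect_fluid_on_def by blast

end


lemma D2_gdot:
  assumes "open V" "\<And>i j. D2 V (\<lambda>y. G y $ i $ j)" "\<And>i. D2 V (\<lambda>y. A y $ i)" "\<And>i. D2 V (\<lambda>y. B y $ i)"
  shows "D2 V (\<lambda>y. gdot G y (A y) (B y))"
  unfolding gdot_def using assms by (intro D2_sum D2_mult) auto

lemma D2_diff2:
  assumes "D2 V f" "D2 V g" "open V" shows "D2 V (\<lambda>y. f y - g y)"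
proof -
  have "D2 V (\<lambda>y. f y + (-1) * g y)" using assms by (intro D2_add D2_mult D2_const) auto
  thus ?thesis by simp
qed

lemma D2_cont: "D2 V f \<Longrightarrow> continuous_on V f"
  by (meson D2_diff continuous_at_imp_continuous_on differentiable_imp_continuous_within)

context fl begin

lemma Q_D2: "D2 U Q" unfolding Q_def[abs_def] using U_open G_D2 xi_D2 xi_D2 by (rule D2_gdot)
lemma E_D2: "D2 U E" unfolding E_def[abs_def] using U_open G_D2 u_D2 xi_D2 by (rule D2_gdot)

definition "g1 y = 1 + Q y * inverse (E y * E y)"

lemma g1_D2: "D2 U g1"
proof -
  have "D2 U (\<lambda>y. inverse (E y * E y))"
  proof (rule D2_inverse[OF D2_mult[OF E_D2 E_D2 U_open] U_open])
    fix y assume "y \<in> U" thus "E y * E y \<noteq> 0" using EnegU[of y] by simp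
  qed
  thus ?thesis unfolding g1_def[abs_def] by (intro D2_add D2_const D2_mult Q_D2 U_open)
qed

lemma g1U: "x \<in> U \<Longrightarrow> g1 x = (v x)\<^sup>2"
proof -
  assume x: "x \<in> U"
  have "Q x * inverse (E x * E x) = - (1 - (v x)\<^sup>2)"
    using E2U[OF x] EnegU[OF x] by (simp add: field_simps power2_eq_square)
  thus ?thesis unfolding g1_def by simp
qed

definition "W = U \<inter> g1 -` {0<..}"

lemma W_open: "open W"
proof -
  have c: "continuous_on U g1" by (rule D2_cont[OF g1_D2])
  have "open (g1 -` {0<..} \<inter> U)"
    using continuous_on_open_vimage[OF U_open, THEN iffD1, OF c, rule_format, OF open_greaterThan[of 0]] .
  hence "open (U \<inter> g1 -` {0<..})" by (simp add: Int_commute)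
  thus ?thesis unfolding W_def .
qed
lemma WU: "W \<subseteq> U" unfolding W_def by blast
lemma WU': "x \<in> W \<Longrightarrow> x \<in> U" unfolding W_def by blast
lemma vW: assumes x: "x \<in> W" shows "v x > 0"
proof -
  have xU: "x \<in> U" using x unfolding W_def by blast
  have "g1 x > 0" using x unfolding W_def by simp
  hence v2: "(v x)\<^sup>2 > 0" using g1U[OF xU] by simp
  have "v x \<ge> 0" using vU(1)[OF xU] .
  moreover have "v x \<noteq> 0" using v2 by (intro notI) simp
  ultimately show ?thesis by simp
qed
lemma pW: "p \<in> W"
proof -
  have "v p > 0" using sonic d_ge1 by simp
  hence "g1 p > 0" using g1U[OF pU] by simp
  thus ?thesis unfolding W_def using pU by simp
qed

lemma v_D2: "D2 W v"
proof -
  have a: "D2 W (\<lambda>y. sqrt (g1 y))"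
  proof (rule D2_sqrt[OF D2_sub[OF g1_D2 WU] W_open])
    fix y assume "y \<in> W" thus "g1 y > 0" unfolding W_def by simp
  qed
  have b: "\<And>y. y \<in> W \<Longrightarrow> sqrt (g1 y) = v y"
  proof -
    fix y assume y: "y \<in> W"
    have "sqrt (g1 y) = sqrt ((v y)\<^sup>2)" using g1U[OF WU'[OF y]] by simp
    also have "\<dots> = v y" using vU(1)[OF WU'[OF y]] by simp
    finally show "sqrt (g1 y) = v y" .
  qed
  show ?thesis by (rule D2_local[OF a W_open b])
qed

lemma eta_formula:
  assumes x: "x \<in> W"
  shows "\<eta> x $ m = inverse (v x) * (sqrt (1 - (v x)\<^sup>2) * u x $ m - inverse (R x) * \<xi> x $ m)"
proof -
  have xU: "x \<in> U" using x by (rule WU')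
  have "sqrt (1 - (v x)\<^sup>2) * gm x = 1" unfolding gm_def using v2U[OF xU] by simp
  hence e1: "sqrt (1 - (v x)\<^sup>2) *\<^sub>R u x = \<xi>b x + v x *\<^sub>R \<eta> x"
    unfolding uU[OF xU] by (simp add: scaleR_scaleR)
  hence e2: "v x *\<^sub>R \<eta> x = sqrt (1 - (v x)\<^sup>2) *\<^sub>R u x - \<xi>b x" by (metis add_diff_cancel_left')
  have "\<eta> x = inverse (v x) *\<^sub>R (v x *\<^sub>R \<eta> x)" using vW[OF x] by simp
  also have "\<dots> = inverse (v x) *\<^sub>R (sqrt (1 - (v x)\<^sup>2) *\<^sub>R u x - inverse (R x) *\<^sub>R \<xi> x)"
    unfolding e2 xibU[OF xU] by (simp add: inverse_eq_divide)
  finally show ?thesis by simp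
qed

lemma eta_D2: "D2 W (\<lambda>y. \<eta> y $ m)"
proof -
  have vd: "D2 W v" by (rule v_D2)
  have D2u: "D2 W (\<lambda>y. u y $ m)" by (rule D2_sub[OF u_D2 WU])
  have D2xi: "D2 W (\<lambda>y. \<xi> y $ m)" by (rule D2_sub[OF xi_D2 WU])
  have s1: "D2 W (\<lambda>y. sqrt (1 - (v y)\<^sup>2))"
  proof (rule D2_sqrt[OF _ W_open])
    show "D2 W (\<lambda>y. 1 - (v y)\<^sup>2)" unfolding power2_eq_square
      by (intro D2_diff2 D2_const D2_mult vd W_open)
    show "\<And>y. y \<in> W \<Longrightarrow> 1 - (v y)\<^sup>2 > 0" using v2U WU' by blast
  qed
  have r: "D2 W (\<lambda>y. inverse (R y))"
  proof (rule D2_inverse[OF _ W_open])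
    show "D2 W R" unfolding R_def[abs_def]
    proof (rule D2_sqrt[OF _ W_open])
      show "D2 W (\<lambda>y. - Q y)" using D2_diff2[OF D2_const D2_sub[OF Q_D2 WU] W_open, of 0] by simp
      show "\<And>y. y \<in> W \<Longrightarrow> - Q y > 0" using QU WU' by fastforce
    qed
    show "\<And>y. y \<in> W \<Longrightarrow> R y \<noteq> 0" using RU(1) WU' by fastforce
  qed
  have iv: "D2 W (\<lambda>y. inverse (v y))" by (rule D2_inverse[OF vd W_open]) (use vW in fastforce)
  have "D2 W (\<lambda>y. inverse (v y) * (sqrt (1 - (v y)\<^sup>2) * u y $ m - inverse (R y) * \<xi> y $ m))"
    by (intro D2_mult D2_diff2 iv s1 D2u r D2xi W_open)
  moreover have "\<And>y. y \<in> W \<Longrightarrow> inverse (v y) * (sqrt (1 - (v y)\<^sup>2) * u y $ m - inverse (R y) * \<xi> y $ m) = \<eta> y $ m"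
    using eta_formula by simp
  ultimately show ?thesis by (rule D2_local[OF _ W_open])
qed

end


lemma sym_contr:
  fixes T c :: "'n::finite \<Rightarrow> 'n \<Rightarrow> real"
  assumes "\<And>m l. T m l = T l m"
  shows "(\<Sum>m\<in>UNIV. \<Sum>l\<in>UNIV. T m l * c m l) = (\<Sum>m\<in>UNIV. \<Sum>l\<in>UNIV. T m l * (c m l + c l m)) / 2"
proof -
  have "(\<Sum>m\<in>UNIV. \<Sum>l\<in>UNIV. T m l * c l m) = (\<Sum>l\<in>UNIV. \<Sum>m\<in>UNIV. T m l * c l m)"
    by (rule sum.swap)
  also have "\<dots> = (\<Sum>m\<in>UNIV. \<Sum>l\<in>UNIV. T m l * c m l)" using assms by simp
  finally have "(\<Sum>m\<in>UNIV. \<Sum>l\<in>UNIV. T m l * c l m) = (\<Sum>m\<in>UNIV. \<Sum>l\<in>UNIV. T m l * c m l)" .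
  thus ?thesis by (simp add: distrib_left sum.distrib)
qed

lemma antisym_contr:
  fixes w :: "'n::finite \<Rightarrow> 'n \<Rightarrow> real"
  assumes "\<And>i j. w i j = - w j i"
  shows "(\<Sum>i\<in>UNIV. \<Sum>j\<in>UNIV. w i j * a i * a j) = 0"
proof -
  have "(\<Sum>i\<in>UNIV. \<Sum>j\<in>UNIV. w i j * a i * a j) = (\<Sum>j\<in>UNIV. \<Sum>i\<in>UNIV. w i j * a i * a j)"
    by (rule sum.swap)
  also have "\<dots> = (\<Sum>j\<in>UNIV. \<Sum>i\<in>UNIV. - (w j i * a j * a i))"
    by (intro sum.cong refl) (subst assms, simp add: algebra_simps)
  also have "\<dots> = - (\<Sum>i\<in>UNIV. \<Sum>j\<in>UNIV. w i j * a i * a j)"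
    by (simp add: sum_negf)
  finally show ?thesis by simp
qed

lemma lie_const0: "lie_fun X (\<lambda>y. c) x = 0" unfolding lie_fun_def by simp

context fl begin

lemma Gd: "x \<in> U \<Longrightarrow> (\<lambda>y. G y $ i $ j) differentiable (at x)" using G_D2 D2_diff by blast
lemma xid: "x \<in> U \<Longrightarrow> (\<lambda>y. \<xi> y $ i) differentiable (at x)" using xi_D2 D2_diff by blast
lemma ud: "x \<in> U \<Longrightarrow> (\<lambda>y. u y $ i) differentiable (at x)" using u_D2 D2_diff by blast
lemma etad: "x \<in> W \<Longrightarrow> (\<lambda>y. \<eta> y $ i) differentiable (at x)" using eta_D2 D2_diff by blast
lemma nd: "x \<in> U \<Longrightarrow> n differentiable (at x)" using n_D2 D2_diff by blast
lemma hd: "x \<in> U \<Longrightarrow> h differentiable (at x)" using h_D2 D2_diff by blast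
lemma Pd: "x \<in> U \<Longrightarrow> P differentiable (at x)" using P_D2 D2_diff by blast
lemma sd: "x \<in> U \<Longrightarrow> s differentiable (at x)" using s_D2 D2_diff by blast
lemma Qd: "x \<in> U \<Longrightarrow> Q differentiable (at x)" using Q_D2 D2_diff by blast
lemma Ed: "x \<in> U \<Longrightarrow> E differentiable (at x)" using E_D2 D2_diff by blast
lemma vd: "x \<in> W \<Longrightarrow> v differentiable (at x)" using v_D2 D2_diff by blast

lemma killing0: "x \<in> U \<Longrightarrow> pt.Kil G x \<xi> m k = 0"
  using xi_killing ptU unfolding killing_on_def pt.Kil_def[OF ptU] by blast

lemma divxi: assumes x: "x \<in> U" shows "div_vec G \<xi> x = 0"
proof -
  interpret pt G x by (rule ptU[OF x])
  have "2 * div_vec G \<xi> x = 0" unfolding trace_kil[symmetric] using killing0[OF x] by simp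
  thus ?thesis by simp
qed

lemma DxiQ: assumes x: "x \<in> U" shows "lie_fun \<xi> Q x = 0"
proof -
  interpret pt G x by (rule ptU[OF x])
  have "lie_fun \<xi> Q x = (\<Sum>m\<in>UNIV. \<Sum>n\<in>UNIV. \<xi> x $ m * \<xi> x $ n * Kil \<xi> m n)"
    unfolding Q_def[abs_def] lie_gdot[OF xid[OF x] xid[OF x]] kil_contr ..
  thus ?thesis using killing0[OF x] by simp
qed

lemma DxiE: assumes x: "x \<in> U" shows "lie_fun \<xi> E x = 0"
proof -
  interpret pt G x by (rule ptU[OF x])
  have c: "DX u \<xi> m = DX \<xi> u m" for m
  proof -
    have "lie_vec \<xi> u x $ m = 0" using steady x by simp
    thus ?thesis unfolding lie_vec_def DX_def by (simp add: sum_subtractf)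
  qed
  have "lie_fun \<xi> E x = (\<Sum>m\<in>UNIV. \<Sum>n\<in>UNIV. u x $ m * \<xi> x $ n * Kil \<xi> m n)"
    unfolding E_def[abs_def] lie_gdot[OF ud[OF x] xid[OF x]] kil_contr c ..
  thus ?thesis using killing0[OF x] by simp
qed

lemma Bxi: assumes x: "x \<in> W"
  shows "(\<Sum>i\<in>UNIV. \<Sum>j\<in>UNIV. cd_covec G (lower G \<eta>) i j x * \<xi> x $ i * \<xi> x $ j) = lie_fun \<eta> Q x / 2"
proof -
  have xU: "x \<in> U" using x by (rule WU')
  interpret pt G x by (rule ptU[OF xU])
  have D0: "lie_fun \<xi> (\<lambda>y. gdot G y (\<eta> y) (\<xi> y)) x = 0"
  proof -
    have "lie_fun \<xi> (\<lambda>y. gdot G y (\<eta> y) (\<xi> y)) x = lie_fun \<xi> (\<lambda>y. 0) x"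
      by (rule lie_local[OF U_open xU]) (use xieta in blast)
    thus ?thesis by (simp add: lie_const0)
  qed
  show ?thesis unfolding Q_def[abs_def]
    by (rule shear_xx[OF xid[OF xU] etad[OF x] _ D0]) (simp add: killing0[OF xU])
qed

end


context fl begin

lemma S_formula: assumes x: "x \<in> W"
  shows "(\<Sum>i\<in>UNIV. \<Sum>j\<in>UNIV. \<sigma> x $ i $ j * \<xi>b x $ i * \<xi>b x $ j)
       = lie_fun \<eta> Q x / (2 * (R x)\<^sup>2) + div_vec G \<eta> x / d"
proof -
  have xU: "x \<in> U" using x by (rule WU')
  define a where "a i = \<xi>b x $ i" for i
  define cd where "cd i j = cd_covec G (lower G \<eta>) i j x" for i j
  define le where "le i = lower G \<eta> x $ i" for i
  define la where "la i = lower G acc x $ i" for i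
  define \<Theta> where "\<Theta> = div_vec G \<eta> x"
  have pw: "\<sigma> x $ i $ j * a i * a j = cd i j * a i * a j - (le i * a i) * (la j * a j)
     - \<Theta> / d * (G x $ i $ j * a i * a j) + \<Theta> / d * ((le i * a i) * (le j * a j)) - \<omega> x $ i $ j * a i * a j" for i j
  proof -
    have "cd i j - le i * la j = \<Theta> / d * (G x $ i $ j - le i * le j) + \<sigma> x $ i $ j + \<omega> x $ i $ j"
      using shear_decomp xU unfolding cd_def le_def la_def \<Theta>_def by blast
    hence hs: "\<sigma> x $ i $ j = cd i j - le i * la j - \<Theta> / d * (G x $ i $ j - le i * le j) - \<omega> x $ i $ j" by simp
    show ?thesis unfolding hs by (simp add: algebra_simps)
  qed
  have s2: "(\<Sum>i\<in>UNIV. le i * a i) = 0"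
  proof -
    have "(\<Sum>i\<in>UNIV. le i * a i) = gdot G x (\<xi>b x) (\<eta> x)"
      unfolding le_def a_def lower_def gdot_def by (simp add: sum_distrib_right sum_distrib_left algebra_simps)
    thus ?thesis using xibeta[OF xU] by simp
  qed
  have s3: "(\<Sum>i\<in>UNIV. \<Sum>j\<in>UNIV. G x $ i $ j * a i * a j) = -1"
    using xibxib[OF xU] unfolding gdot_def a_def by (simp add: algebra_simps)
  have s4: "(\<Sum>i\<in>UNIV. \<Sum>j\<in>UNIV. \<omega> x $ i $ j * a i * a j) = 0"
    by (rule antisym_contr) (use omega_antisym xU in blast)
  have s1: "(\<Sum>i\<in>UNIV. \<Sum>j\<in>UNIV. cd i j * a i * a j) = lie_fun \<eta> Q x / 2 / (R x)\<^sup>2"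
  proof -
    have "(\<Sum>i\<in>UNIV. \<Sum>j\<in>UNIV. cd i j * a i * a j) = (\<Sum>i\<in>UNIV. \<Sum>j\<in>UNIV. cd i j * \<xi> x $ i * \<xi> x $ j) / (R x)\<^sup>2"
      unfolding a_def xibU[OF xU] by (simp add: sum_divide_distrib power2_eq_square)
    thus ?thesis using Bxi[OF x] unfolding cd_def by simp
  qed
  have p1: "(\<Sum>i\<in>UNIV. \<Sum>j\<in>UNIV. (le i * a i) * (la j * a j)) = 0"
    using s2 by (simp add: sum_product[symmetric])
  have p2: "(\<Sum>i\<in>UNIV. \<Sum>j\<in>UNIV. (le i * a i) * (le j * a j)) = 0"
    using s2 by (simp add: sum_product[symmetric])
  have "(\<Sum>i\<in>UNIV. \<Sum>j\<in>UNIV. \<sigma> x $ i $ j * a i * a j) =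
      (\<Sum>i\<in>UNIV. \<Sum>j\<in>UNIV. cd i j * a i * a j) - (\<Sum>i\<in>UNIV. \<Sum>j\<in>UNIV. (le i * a i) * (la j * a j))
      - \<Theta> / d * (\<Sum>i\<in>UNIV. \<Sum>j\<in>UNIV. G x $ i $ j * a i * a j)
      + \<Theta> / d * (\<Sum>i\<in>UNIV. \<Sum>j\<in>UNIV. (le i * a i) * (le j * a j))
      - (\<Sum>i\<in>UNIV. \<Sum>j\<in>UNIV. \<omega> x $ i $ j * a i * a j)"
    unfolding pw by (simp add: sum.distrib sum_subtractf sum_distrib_left)
  also have "\<dots> = lie_fun \<eta> Q x / (2 * (R x)\<^sup>2) + \<Theta> / d"
    unfolding s1 p1 s3 p2 s4 by simp
  finally show ?thesis unfolding a_def \<Theta>_def .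
qed

lemma gibbs: assumes x: "x \<in> U"
  shows "lie_fun X h x = T x * lie_fun X s x + lie_fun X P x / n x"
proof -
  have "\<forall>m. pd h m x = T x * pd s m x + pd P m x / n x" using fluid x unfolding perfect_fluid_on_def by blast
  thus ?thesis unfolding lie_fun_def by (simp add: sum.distrib sum_distrib_left sum_divide_distrib algebra_simps)
qed

lemma pos: assumes x: "x \<in> U" shows "n x > 0" "h x > 0" "P x > 0" "s x > 0" "T x > 0"
  using fluid x unfolding perfect_fluid_on_def by auto

lemma cont_u: assumes x: "x \<in> U"
  shows "lie_fun u n x + n x * div_vec G u x = 0"
proof -
  interpret pt G x by (rule ptU[OF x])
  have "div_vec G (\<lambda>y. n y *\<^sub>R u y) x = 0" using fluid x unfolding perfect_fluid_on_def by blast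
  thus ?thesis unfolding div_scale[OF nd[OF x] ud[OF x]] .
qed

end


lemma div_local:
  assumes "open V" "x \<in> V" "\<And>y. y \<in> V \<Longrightarrow> X y = Y y"
  shows "div_vec G X x = div_vec G Y x"
proof -
  have "pd (\<lambda>y. X y $ m) m x = pd (\<lambda>y. Y y $ m) m x" for m
    by (rule pd_local[OF assms(1,2)]) (simp add: assms(3))
  moreover have "X x = Y x" using assms by blast
  ultimately show ?thesis unfolding div_vec_def cd_vec_def by simp
qed

context fl begin

definition "Tt y = (\<chi> i j. n y * h y * u y $ i * u y $ j + P y * ginv G y $ i $ j)"

lemma Tt_diff: "x \<in> U \<Longrightarrow> (\<lambda>y. Tt y $ m $ k) differentiable (at x)"
  unfolding Tt_def by (simp add: differentiable_add differentiable_mult nd hd Pd ud ginv_diff)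

lemma Tt_sym: assumes x: "x \<in> U" shows "Tt x $ m $ l = Tt x $ l $ m"
proof -
  interpret pt G x by (rule ptU[OF x])
  show ?thesis unfolding Tt_def using gis[of m l] by (simp add: algebra_simps)
qed

lemma euler0: assumes x: "x \<in> U" shows "div_tensor G Tt k x = 0"
proof -
  have "\<forall>x\<in>U. \<forall>k. div_tensor G (\<lambda>y. \<chi> i j. n y * h y * u y $ i * u y $ j + P y * ginv G y $ i $ j) k x = 0"
    using fluid unfolding perfect_fluid_on_def by (elim conjE)
  hence "div_tensor G (\<lambda>y. \<chi> i j. n y * h y * u y $ i * u y $ j + P y * ginv G y $ i $ j) k x = 0"
    using x by blast
  moreover have "(\<lambda>y. \<chi> i j. n y * h y * u y $ i * u y $ j + P y * ginv G y $ i $ j) = Tt"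
    by (rule ext) (simp add: Tt_def)
  ultimately show ?thesis by simp
qed

lemma TtK: assumes x: "x \<in> U" and Xd: "\<And>l. (\<lambda>y. X y $ l) differentiable (at x)"
  shows "(\<Sum>m\<in>UNIV. \<Sum>l\<in>UNIV. Tt x $ m $ l * cd_covec G (lower G X) m l x)
     = (\<Sum>m\<in>UNIV. \<Sum>l\<in>UNIV. Tt x $ m $ l * pt.Kil G x X m l) / 2"
proof -
  interpret pt G x by (rule ptU[OF x])
  have e: "(\<Sum>m\<in>UNIV. \<Sum>l\<in>UNIV. Tt x $ m $ l * cd_covec G (lower G X) m l x)
     = (\<Sum>m\<in>UNIV. \<Sum>l\<in>UNIV. Tt x $ m $ l * (cd_covec G (lower G X) m l x + cd_covec G (lower G X) l m x)) / 2"
    by (rule sym_contr[of "\<lambda>m l. Tt x $ m $ l" "\<lambda>m l. cd_covec G (lower G X) m l x", OF Tt_sym[OF x]])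
  show ?thesis unfolding e cd_sym_kil[OF Xd] ..
qed

lemma lowcontr: assumes y: "y \<in> U"
  shows "(\<Sum>k\<in>UNIV. Tt y $ m $ k * lower G X y $ k) = n y * h y * gdot G y (u y) (X y) * u y $ m + P y * X y $ m"
proof -
  interpret pt G y by (rule ptU[OF y])
  have a: "(\<Sum>k\<in>UNIV. u y $ k * lower G X y $ k) = gdot G y (u y) (X y)"
    unfolding lower_def gdot_def by (simp add: sum_distrib_left algebra_simps)
  have b: "(\<Sum>k\<in>UNIV. ginv G y $ m $ k * lower G X y $ k) = X y $ m"
  proof -
    have "(\<Sum>k\<in>UNIV. ginv G y $ m $ k * lower G X y $ k) = (\<Sum>k\<in>UNIV. \<Sum>j\<in>UNIV. gi m k * g k j * X y $ j)"
      unfolding lower_def by (simp add: sum_distrib_left algebra_simps)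
    also have "\<dots> = (\<Sum>j\<in>UNIV. \<Sum>k\<in>UNIV. gi m k * g k j * X y $ j)" by (rule sum.swap)
    also have "\<dots> = (\<Sum>j\<in>UNIV. (\<Sum>k\<in>UNIV. gi m k * g k j) * X y $ j)" by (simp add: sum_distrib_right)
    finally have "(\<Sum>k\<in>UNIV. ginv G y $ m $ k * lower G X y $ k) = (\<Sum>j\<in>UNIV. (\<Sum>k\<in>UNIV. gi m k * g k j) * X y $ j)" .
    thus ?thesis by (simp add: gL delta1)
  qed
  have "(\<Sum>k\<in>UNIV. Tt y $ m $ k * lower G X y $ k) = n y * h y * u y $ m * (\<Sum>k\<in>UNIV. u y $ k * lower G X y $ k)
      + P y * (\<Sum>k\<in>UNIV. ginv G y $ m $ k * lower G X y $ k)"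
    unfolding Tt_def by (simp add: sum.distrib sum_distrib_left algebra_simps)
  thus ?thesis unfolding a b by simp
qed

end


lemma lie_diff:
  assumes "f differentiable (at x)" "g differentiable (at x)"
  shows "lie_fun X (\<lambda>y. f y - g y) x = lie_fun X f x - lie_fun X g x"
  unfolding lie_fun_def pd_diff[OF assms] by (simp add: sum_subtractf algebra_simps)

context fl begin

lemma euler_xi: assumes x: "x \<in> U" shows "lie_fun u (\<lambda>y. h y * E y) x = 0"
proof -
  interpret pt G x by (rule ptU[OF x])
  define V where "V = (\<lambda>y. \<chi> m. \<Sum>k\<in>UNIV. Tt y $ m $ k * lower G \<xi> y $ k)"
  define V' where "V' = (\<lambda>y. (n y * (h y * E y)) *\<^sub>R u y + P y *\<^sub>R \<xi> y)"
  have ec: "(\<Sum>k\<in>UNIV. lower G \<xi> x $ k * div_tensor G Tt k x) =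
     div_vec G V x - (\<Sum>m\<in>UNIV. \<Sum>l\<in>UNIV. Tt x $ m $ l * cd_covec G (lower G \<xi>) m l x)"
    unfolding V_def by (rule euler_contr[OF Tt_diff[OF x] xid[OF x]])
  have z1: "(\<Sum>k\<in>UNIV. lower G \<xi> x $ k * div_tensor G Tt k x) = 0" using euler0[OF x] by simp
  have z2: "(\<Sum>m\<in>UNIV. \<Sum>l\<in>UNIV. Tt x $ m $ l * cd_covec G (lower G \<xi>) m l x) = 0"
    unfolding TtK[OF x xid[OF x]] using killing0[OF x] by simp
  have VV: "\<And>y. y \<in> U \<Longrightarrow> V y = V' y"
  proof -
    fix y assume y: "y \<in> U"
    show "V y = V' y" unfolding V_def V'_def vec_eq_iff vec_lambda_beta lowcontr[OF y] by (simp add: E_def algebra_simps)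
  qed
  have fd: "(\<lambda>y. n y * (h y * E y)) differentiable (at x)"
    by (intro differentiable_mult nd[OF x] hd[OF x] Ed[OF x])
  have d1: "\<And>l. (\<lambda>y. ((n y * (h y * E y)) *\<^sub>R u y) $ l) differentiable (at x)"
    using fd ud[OF x] by (simp add: differentiable_mult)
  have d2: "\<And>l. (\<lambda>y. (P y *\<^sub>R \<xi> y) $ l) differentiable (at x)"
    using Pd[OF x] xid[OF x] by (simp add: differentiable_mult)
  have "div_vec G V' x = lie_fun u (\<lambda>y. n y * (h y * E y)) x + n x * (h x * E x) * div_vec G u x
      + (lie_fun \<xi> P x + P x * div_vec G \<xi> x)"
    unfolding V'_def div_add[OF d1 d2] div_scale[OF fd ud[OF x]] div_scale[OF Pd[OF x] xid[OF x]] ..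
  also have "\<dots> = n x * lie_fun u (\<lambda>y. h y * E y) x"
  proof -
    have "lie_fun u (\<lambda>y. n y * (h y * E y)) x = lie_fun u n x * (h x * E x) + n x * lie_fun u (\<lambda>y. h y * E y) x"
      by (rule lie_mult[OF nd[OF x] differentiable_mult[OF hd[OF x] Ed[OF x]]])
    moreover have "lie_fun u n x = - n x * div_vec G u x" using cont_u[OF x] by simp
    moreover have "lie_fun \<xi> P x = 0" using steady x by blast
    ultimately show ?thesis using divxi[OF x] by (simp add: algebra_simps)
  qed
  finally have "div_vec G V' x = n x * lie_fun u (\<lambda>y. h y * E y) x" .
  moreover have "div_vec G V x = div_vec G V' x" by (rule div_local[OF U_open x VV])
  ultimately have "n x * lie_fun u (\<lambda>y. h y * E y) x = 0" using ec z1 z2 by simp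
  thus ?thesis using pos(1)[OF x] by simp
qed

lemma euler_u: assumes x: "x \<in> U" shows "lie_fun u s x = 0"
proof -
  interpret pt G x by (rule ptU[OF x])
  define V where "V = (\<lambda>y. \<chi> m. \<Sum>k\<in>UNIV. Tt y $ m $ k * lower G u y $ k)"
  define V' where "V' = (\<lambda>y. (P y - n y * h y) *\<^sub>R u y)"
  have ec: "(\<Sum>k\<in>UNIV. lower G u x $ k * div_tensor G Tt k x) =
     div_vec G V x - (\<Sum>m\<in>UNIV. \<Sum>l\<in>UNIV. Tt x $ m $ l * cd_covec G (lower G u) m l x)"
    unfolding V_def by (rule euler_contr[OF Tt_diff[OF x] ud[OF x]])
  have z1: "(\<Sum>k\<in>UNIV. lower G u x $ k * div_tensor G Tt k x) = 0" using euler0[OF x] by simp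
  have luu: "lie_fun u (\<lambda>y. gdot G y (u y) (u y)) x = 0"
  proof -
    have "lie_fun u (\<lambda>y. gdot G y (u y) (u y)) x = lie_fun u (\<lambda>y. -1) x"
      by (rule lie_local[OF U_open x]) (use uu in blast)
    thus ?thesis by (simp add: lie_const0)
  qed
  have kk: "(\<Sum>m\<in>UNIV. \<Sum>l\<in>UNIV. Tt x $ m $ l * Kil u m l)
      = n x * h x * (\<Sum>m\<in>UNIV. \<Sum>l\<in>UNIV. u x $ m * u x $ l * Kil u m l)
        + P x * (\<Sum>m\<in>UNIV. \<Sum>l\<in>UNIV. gi m l * Kil u m l)"
    unfolding Tt_def by (simp add: sum.distrib sum_distrib_left algebra_simps)
  have k1: "(\<Sum>m\<in>UNIV. \<Sum>l\<in>UNIV. u x $ m * u x $ l * Kil u m l) = 0"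
    unfolding kil_contr lie_gdot[OF ud[OF x] ud[OF x], symmetric] by (rule luu)
  have z2: "(\<Sum>m\<in>UNIV. \<Sum>l\<in>UNIV. Tt x $ m $ l * cd_covec G (lower G u) m l x) = P x * div_vec G u x"
    unfolding TtK[OF x ud[OF x]] kk k1 trace_kil by simp
  have VV: "\<And>y. y \<in> U \<Longrightarrow> V y = V' y"
  proof -
    fix y assume y: "y \<in> U"
    show "V y = V' y" unfolding V_def V'_def vec_eq_iff vec_lambda_beta lowcontr[OF y] uu[OF y] by (simp add: algebra_simps)
  qed
  have fd: "(\<lambda>y. P y - n y * h y) differentiable (at x)"
    by (intro differentiable_diff differentiable_mult nd[OF x] hd[OF x] Pd[OF x])
  have "div_vec G V' x = lie_fun u (\<lambda>y. P y - n y * h y) x + (P x - n x * h x) * div_vec G u x"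
    unfolding V'_def by (rule div_scale[OF fd ud[OF x]])
  also have "\<dots> = P x * div_vec G u x - n x * T x * lie_fun u s x"
  proof -
    have "lie_fun u (\<lambda>y. P y - n y * h y) x = lie_fun u P x - (lie_fun u n x * h x + n x * lie_fun u h x)"
      unfolding lie_diff[OF Pd[OF x] differentiable_mult[OF nd[OF x] hd[OF x]]] lie_mult[OF nd[OF x] hd[OF x]] ..
    moreover have "lie_fun u n x = - n x * div_vec G u x" using cont_u[OF x] by simp
    moreover have "n x * lie_fun u h x = n x * T x * lie_fun u s x + lie_fun u P x"
      unfolding gibbs[OF x] using pos(1)[OF x] by (simp add: algebra_simps)
    ultimately show ?thesis by (simp add: algebra_simps)
  qed
  finally have "div_vec G V' x = P x * div_vec G u x - n x * T x * lie_fun u s x" .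
  moreover have "div_vec G V x = div_vec G V' x" by (rule div_local[OF U_open x VV])
  ultimately have "n x * T x * lie_fun u s x = 0" using ec z1 z2 by simp
  thus ?thesis using pos(1,5)[OF x] by simp
qed

end


lemma lie_cmult:
  assumes "f differentiable (at x)"
  shows "lie_fun X (\<lambda>y. c * f y) x = c * lie_fun X f x"
  unfolding lie_fun_def pd_cmult[OF assms] by (simp add: sum_distrib_left algebra_simps)

context fl begin

definition "cc z = (H 2 z powr (d+1) - H 1 z powr (d+1)) / (d+1)"

lemma cc_eq: "P' > 0 \<Longrightarrow> z > 0 \<Longrightarrow> eos_hP H P' z * H P' z powr d = cc z"
  unfolding cc_def using eos_c[OF eos] d_ge1 by simp

lemma cc_pos: assumes "z > 0" shows "cc z > 0"
proof -
  have "H 1 z > 0" "eos_hP H 1 z > 0" using eos assms unfolding radiation_eos_def by auto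
  hence "eos_hP H 1 z * H 1 z powr d > 0" by simp
  thus ?thesis using cc_eq[of 1 z] assms by simp
qed

lemma cc_deriv: assumes sg: "z > 0" shows "\<exists>D. (cc has_real_derivative D) (at z)"
proof -
  have hp: "\<And>q. q > 0 \<Longrightarrow> H q z > 0 \<and> (\<lambda>r. H q r) differentiable (at z)"
    using eos sg unfolding radiation_eos_def by blast
  have D2: "DERIV (\<lambda>r. H 2 r) z :> deriv (\<lambda>r. H 2 r) z" "DERIV (\<lambda>r. H 1 r) z :> deriv (\<lambda>r. H 1 r) z"
    using hp[of 2] hp[of 1] DERIV_deriv_iff_real_differentiable by auto
  have "DERIV cc z :> ((d+1) * H 2 z powr (d + 1 - of_nat 1) * deriv (\<lambda>r. H 2 r) z
       - (d+1) * H 1 z powr (d + 1 - of_nat 1) * deriv (\<lambda>r. H 1 r) z) / (d+1)"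
    unfolding cc_def[abs_def]
    by (intro DERIV_cdivide DERIV_diff DERIV_fun_powr D2) (use hp in auto)
  thus ?thesis by blast
qed

lemma n_eos: assumes y: "y \<in> U" shows "n y = h y powr d * inverse (cc (s y))"
proof -
  have f: "h y = H (P y) (s y)" "n y = eos_n H (P y) (s y)"
    using fluid y unfolding perfect_fluid_on_def by auto
  have e: "eos_hP H (P y) (s y) * H (P y) (s y) powr d = cc (s y)" by (rule cc_eq) (use pos[OF y] in auto)
  have hp: "eos_hP H (P y) (s y) > 0" using eos pos[OF y] unfolding radiation_eos_def by blast
  have "n y = 1 / eos_hP H (P y) (s y)" unfolding f eos_n_def ..
  also have "\<dots> = H (P y) (s y) powr d / cc (s y)" using e hp cc_pos[of "s y"] pos[OF y] by (simp add: field_simps)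
  finally show ?thesis unfolding f(1) by (simp add: divide_inverse)
qed

lemma lie_n: assumes x: "x \<in> U" and s0: "lie_fun X s x = 0"
  shows "lie_fun X n x = d * n x / h x * lie_fun X h x"
proof -
  have hx: "h x > 0" "s x > 0" using pos[OF x] by auto
  have D1: "DERIV (\<lambda>t. t powr d) (h x) :> d * h x powr (d - of_nat 1) * 1"
    by (rule DERIV_fun_powr[OF DERIV_ident]) (use hx in simp)
  obtain D where D: "(cc has_real_derivative D) (at (s x))" using cc_deriv hx by blast
  have D2: "DERIV (\<lambda>t. inverse (cc t)) (s x) :> - (D * inverse (cc (s x) ^ Suc (Suc 0)))"
    by (rule DERIV_inverse_fun[OF D]) (use cc_pos[OF hx(2)] in simp)
  have "lie_fun X n x = lie_fun X (\<lambda>y. h y powr d * inverse (cc (s y))) x"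
    by (rule lie_local[OF U_open x]) (rule n_eos)
  also have "\<dots> = lie_fun X (\<lambda>y. h y powr d) x * inverse (cc (s x)) + h x powr d * lie_fun X (\<lambda>y. inverse (cc (s y))) x"
    by (rule lie_mult[OF diff_comp[OF D1 hd[OF x]] diff_comp[OF D2 sd[OF x]]])
  also have "\<dots> = d * h x powr (d - 1) * lie_fun X h x * inverse (cc (s x))"
    unfolding lie_comp[OF D1 hd[OF x]] lie_comp[OF D2 sd[OF x]] s0 by simp
  also have "\<dots> = d * n x / h x * lie_fun X h x"
    unfolding n_eos[OF x] using hx by (simp add: powr_diff field_simps)
  finally show ?thesis .
qed

end


context fl begin

definition "a y = n y * E y * inverse (Q y)"
definition "b y = - (n y * v y * E y) * inverse (R y)"

lemma DRs: "x \<in> U \<Longrightarrow> DERIV sqrt (- Q x) :> inverse (sqrt (- Q x)) / 2"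
  using DERIV_real_sqrt QU by force

lemma Rd: assumes x: "x \<in> U" shows "R differentiable (at x)"
proof -
  have "(\<lambda>y. sqrt (- Q y)) differentiable (at x)"
    by (rule diff_comp[where f="\<lambda>y. - Q y", OF DRs[OF x]]) (use Qd[OF x] in \<open>simp add: differentiable_minus\<close>)
  thus ?thesis unfolding R_def[abs_def] .
qed

lemma invd: fixes f :: "real^'m \<Rightarrow> real" assumes "f differentiable (at x)" "f x \<noteq> 0" shows "(\<lambda>y. inverse (f y)) differentiable (at x)"
  by (rule diff_comp[OF DERIV_inverse[OF assms(2)] assms(1)])

lemma ad: "x \<in> U \<Longrightarrow> a differentiable (at x)"
  unfolding a_def[abs_def] using nd Ed Qd invd QU by (metis differentiable_mult less_irrefl)

lemma bd: "x \<in> W \<Longrightarrow> b differentiable (at x)"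
proof -
  assume x: "x \<in> W"
  have xU: "x \<in> U" using x by (rule WU')
  have "R x \<noteq> 0" using RU(1)[OF xU] by simp
  hence "(\<lambda>y. inverse (R y)) differentiable (at x)" using invd[OF Rd[OF xU]] by blast
  thus ?thesis unfolding b_def[abs_def]
    by (intro differentiable_mult differentiable_minus nd[OF xU] vd[OF x] Ed[OF xU])
qed

lemma gmE: assumes x: "x \<in> U" shows "gm x = - E x / R x"
  using EU[OF x] RU(1)[OF x] by (simp add: field_simps)

lemma nu_decomp: assumes y: "y \<in> U" shows "n y *\<^sub>R u y = a y *\<^sub>R \<xi> y + b y *\<^sub>R \<eta> y"
proof -
  have "n y *\<^sub>R u y = (n y * (E y / Q y)) *\<^sub>R \<xi> y + (n y * (gm y * v y)) *\<^sub>R \<eta> y"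
    unfolding u_decomp[OF y] by (simp add: scaleR_add_right)
  moreover have "n y * (E y / Q y) = a y" unfolding a_def by (simp add: divide_inverse)
  moreover have "n y * (gm y * v y) = b y" unfolding b_def gmE[OF y] by (simp add: divide_inverse)
  ultimately show ?thesis by simp
qed

lemma lie_u: assumes x: "x \<in> U" shows "lie_fun u f x = (E x / Q x) * lie_fun \<xi> f x + (gm x * v x) * lie_fun \<eta> f x"
  by (rule lie_pt) (rule u_decomp[OF x])

lemma Dxi_h: "x \<in> U \<Longrightarrow> lie_fun \<xi> h x = 0" using gibbs steady by simp
lemma Dxi_n: "x \<in> U \<Longrightarrow> lie_fun \<xi> n x = 0" using lie_n Dxi_h steady by simp

lemma Dxi_a: assumes x: "x \<in> U" shows "lie_fun \<xi> a x = 0"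
proof -
  have q: "Q x \<noteq> 0" using QU[OF x] by simp
  have iq: "(\<lambda>y. inverse (Q y)) differentiable (at x)" using invd[OF Qd[OF x] q] .
  have "lie_fun \<xi> a x = lie_fun \<xi> (\<lambda>y. n y * E y) x * inverse (Q x) + n x * E x * lie_fun \<xi> (\<lambda>y. inverse (Q y)) x"
    unfolding a_def[abs_def] by (rule lie_mult[OF differentiable_mult[OF nd[OF x] Ed[OF x]] iq])
  also have "\<dots> = 0"
    unfolding lie_mult[OF nd[OF x] Ed[OF x]] lie_comp[OF DERIV_inverse[OF q] Qd[OF x]]
    using Dxi_n[OF x] DxiE[OF x] DxiQ[OF x] by simp
  finally show ?thesis .
qed

lemma cont2: assumes x: "x \<in> W" shows "lie_fun \<eta> b x + b x * div_vec G \<eta> x = 0"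
proof -
  have xU: "x \<in> U" using x by (rule WU')
  interpret pt G x by (rule ptU[OF xU])
  have "div_vec G (\<lambda>y. n y *\<^sub>R u y) x = 0" using fluid xU unfolding perfect_fluid_on_def by blast
  moreover have "div_vec G (\<lambda>y. n y *\<^sub>R u y) x = div_vec G (\<lambda>y. a y *\<^sub>R \<xi> y + b y *\<^sub>R \<eta> y) x"
    by (rule div_local[OF U_open xU nu_decomp])
  moreover have "div_vec G (\<lambda>y. a y *\<^sub>R \<xi> y + b y *\<^sub>R \<eta> y) x
     = (lie_fun \<xi> a x + a x * div_vec G \<xi> x) + (lie_fun \<eta> b x + b x * div_vec G \<eta> x)"
  proof -
    have d1: "\<And>l. (\<lambda>y. (a y *\<^sub>R \<xi> y) $ l) differentiable (at x)"
      using ad[OF xU] xid[OF xU] by (simp add: differentiable_mult)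
    have d2: "\<And>l. (\<lambda>y. (b y *\<^sub>R \<eta> y) $ l) differentiable (at x)"
      using bd[OF x] etad[OF x] by (simp add: differentiable_mult)
    show ?thesis unfolding div_add[OF d1 d2] div_scale[OF ad[OF xU] xid[OF xU]] div_scale[OF bd[OF x] etad[OF x]] ..
  qed
  ultimately show ?thesis using Dxi_a[OF xU] divxi[OF xU] by simp
qed

end


context fl begin

definition "F t = (t\<^sup>2 - 1 / d) * inverse (t * (1 - t\<^sup>2))"

lemma S_pt: assumes x: "x \<in> W"
  shows "(\<Sum>i\<in>UNIV. \<Sum>j\<in>UNIV. \<sigma> x $ i $ j * \<xi>b x $ i * \<xi>b x $ j) = F (v x) * lie_fun \<eta> v x"
proof -
  have xU: "x \<in> U" using x by (rule WU')
  have v0: "v x > 0" using vW[OF x] .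
  have gv: "gm x * v x > 0" using gmU(1)[OF xU] v0 by simp
  have e1': "lie_fun \<eta> (\<lambda>y. h y * E y) x = 0"
  proof -
    have "lie_fun \<xi> (\<lambda>y. h y * E y) x = 0"
      unfolding lie_mult[OF hd[OF xU] Ed[OF xU]] using Dxi_h[OF xU] DxiE[OF xU] by simp
    hence "(gm x * v x) * lie_fun \<eta> (\<lambda>y. h y * E y) x = 0" using euler_xi[OF xU] lie_u[OF xU] by simp
    thus "lie_fun \<eta> (\<lambda>y. h y * E y) x = 0" using gmU(1)[OF xU] v0 by simp
  qed
  have e1: "lie_fun \<eta> h x * E x + h x * lie_fun \<eta> E x = 0"
    using e1' unfolding lie_mult[OF hd[OF xU] Ed[OF xU]] .
  have s0: "lie_fun \<eta> s x = 0"
  proof -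
    have "(gm x * v x) * lie_fun \<eta> s x = 0" using euler_u[OF xU] lie_u[OF xU, of s] steady xU by simp
    thus ?thesis using gmU(1)[OF xU] v0 by simp
  qed
  have e2: "lie_fun \<eta> n x = d * n x / h x * lie_fun \<eta> h x" by (rule lie_n[OF xU s0])
  have e3: "lie_fun \<eta> b x + b x * div_vec G \<eta> x = 0" by (rule cont2[OF x])
  have r0: "R x > 0" using RU(1)[OF xU] .
  have e5: "b x * R x = - (n x * v x * E x)" unfolding b_def using r0 by simp
  have e4: "lie_fun \<eta> b x * R x + b x * lie_fun \<eta> R x
      = - (lie_fun \<eta> n x * v x * E x + n x * lie_fun \<eta> v x * E x + n x * v x * lie_fun \<eta> E x)"
  proof -
    have "lie_fun \<eta> (\<lambda>y. b y * R y) x = lie_fun \<eta> (\<lambda>y. (-1) * (n y * v y * E y)) x"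
    proof (rule lie_local[OF W_open x])
      fix y assume y: "y \<in> W"
      have "R y > 0" using RU(1)[OF WU'[OF y]] .
      thus "b y * R y = (-1) * (n y * v y * E y)" unfolding b_def by simp
    qed
    moreover have "lie_fun \<eta> (\<lambda>y. b y * R y) x = lie_fun \<eta> b x * R x + b x * lie_fun \<eta> R x"
      by (rule lie_mult[OF bd[OF x] Rd[OF xU]])
    moreover have "lie_fun \<eta> (\<lambda>y. (-1) * (n y * v y * E y)) x
       = - (lie_fun \<eta> n x * v x * E x + n x * lie_fun \<eta> v x * E x + n x * v x * lie_fun \<eta> E x)"
      unfolding lie_cmult[OF differentiable_mult[OF differentiable_mult[OF nd[OF xU] vd[OF x]] Ed[OF xU]]]
        lie_mult[OF differentiable_mult[OF nd[OF xU] vd[OF x]] Ed[OF xU]] lie_mult[OF nd[OF xU] vd[OF x]]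
      by (simp add: algebra_simps)
    ultimately show ?thesis by simp
  qed
  have e6: "lie_fun \<eta> R x = - lie_fun \<eta> Q x / (2 * R x)"
  proof -
    have dq: "(\<lambda>y. (-1) * Q y) differentiable (at x)" by (rule differentiable_mult[OF differentiable_const Qd[OF xU]])
    have ds: "DERIV sqrt ((-1) * Q x) :> inverse (sqrt (- Q x)) / 2" using DRs[OF xU] by simp
    have Re: "R = (\<lambda>y. sqrt ((-1) * Q y))" unfolding R_def[abs_def] by simp
    have "lie_fun \<eta> R x = inverse (sqrt (- Q x)) / 2 * lie_fun \<eta> (\<lambda>y. (-1) * Q y) x"
      unfolding Re by (rule lie_comp[OF ds dq])
    also have "\<dots> = - lie_fun \<eta> Q x / (2 * R x)"
    proof -
      have "sqrt (- Q x) > 0" using QU[OF xU] by simp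
      thus ?thesis unfolding lie_cmult[OF Qd[OF xU]] R_def by (simp add: field_simps)
    qed
    finally show ?thesis .
  qed
  have e7: "2 * E x * lie_fun \<eta> E x * (1 - (v x)\<^sup>2) + (E x)\<^sup>2 * (- 2 * v x * lie_fun \<eta> v x) = - lie_fun \<eta> Q x"
  proof -
    have "lie_fun \<eta> (\<lambda>y. (E y * E y) * (1 - v y * v y)) x = lie_fun \<eta> (\<lambda>y. (-1) * Q y) x"
    proof (rule lie_local[OF W_open x])
      fix y assume y: "y \<in> W"
      show "(E y * E y) * (1 - v y * v y) = (-1) * Q y" using E2U[OF WU'[OF y]] by (simp add: power2_eq_square)
    qed
    moreover have "lie_fun \<eta> (\<lambda>y. (E y * E y) * (1 - v y * v y)) x
       = (lie_fun \<eta> E x * E x + E x * lie_fun \<eta> E x) * (1 - v x * v x)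
         + (E x * E x) * (0 - (lie_fun \<eta> v x * v x + v x * lie_fun \<eta> v x))"
      unfolding lie_mult[OF differentiable_mult[OF Ed[OF xU] Ed[OF xU]] differentiable_diff[OF differentiable_const differentiable_mult[OF vd[OF x] vd[OF x]]]]
        lie_mult[OF Ed[OF xU] Ed[OF xU]] lie_diff[OF differentiable_const differentiable_mult[OF vd[OF x] vd[OF x]]]
        lie_mult[OF vd[OF x] vd[OF x]] lie_const0 ..
    moreover have "lie_fun \<eta> (\<lambda>y. (-1) * Q y) x = - lie_fun \<eta> Q x" unfolding lie_cmult[OF Qd[OF xU]] by simp
    ultimately show ?thesis by (simp add: power2_eq_square algebra_simps)
  qed
  have e8: "(E x)\<^sup>2 * (1 - (v x)\<^sup>2) = (R x)\<^sup>2" using E2U[OF xU] RU(2)[OF xU] by simp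
  have fa: "div_vec G \<eta> x / d + lie_fun \<eta> Q x / (2 * (R x)\<^sup>2) = ((v x)\<^sup>2 - 1 / d) / (v x * (1 - (v x)\<^sup>2)) * lie_fun \<eta> v x"
  proof (rule final_alg[OF _ r0 _ v0 vU(2)[OF xU] pos(1)[OF xU] pos(2)[OF xU] e1 e2 e3 e4 e5 e6 e7 e8])
    show "d > 0" using d_ge1 by simp
    show "E x \<noteq> 0" using EnegU[OF xU] by simp
  qed
  have Fv: "F (v x) = ((v x)\<^sup>2 - 1 / d) / (v x * (1 - (v x)\<^sup>2))" unfolding F_def by (simp only: divide_inverse)
  show ?thesis unfolding S_formula[OF x] Fv using fa by linarith
qed

end


context fl begin

lemma vp2: "(v p)\<^sup>2 = 1 / d" using sonic d_ge1 by (simp add: power_divide)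

lemma Fp: "F (v p) = 0" unfolding F_def vp2 by simp

lemma fl_main:
  "(\<Sum>i\<in>UNIV. \<Sum>j\<in>UNIV. \<sigma> p $ i $ j * \<xi>b p $ i * \<xi>b p $ j) = 0 \<and>
   lie_fun \<eta> (\<lambda>x. \<Sum>i\<in>UNIV. \<Sum>j\<in>UNIV. \<sigma> x $ i $ j * \<xi>b x $ i * \<xi>b x $ j) p \<ge> 0"
proof
  show "(\<Sum>i\<in>UNIV. \<Sum>j\<in>UNIV. \<sigma> p $ i $ j * \<xi>b p $ i * \<xi>b p $ j) = 0"
    unfolding S_pt[OF pW] Fp by simp
  define t0 where "t0 = v p"
  have t0: "t0 > 0" "1 - t0\<^sup>2 > 0" using vW[OF pW] v2U[OF pU] unfolding t0_def by auto
  have nz: "t0 * (1 - t0\<^sup>2) \<noteq> 0" using t0 by simp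
  have dg: "DERIV (\<lambda>t. t * (1 - t\<^sup>2)) t0 :> 1 * (1 - t0\<^sup>2) + (0 - of_nat 2 * (1 * t0 ^ (2 - Suc 0))) * t0"
    by (rule DERIV_mult[OF DERIV_ident DERIV_diff[OF DERIV_const DERIV_power[OF DERIV_ident]]])
  define Dg where "Dg = - ((1 * (1 - t0\<^sup>2) + (0 - of_nat 2 * (1 * t0 ^ (2 - Suc 0))) * t0) * inverse ((t0 * (1 - t0\<^sup>2)) ^ Suc (Suc 0)))"
  have dig: "DERIV (\<lambda>t. inverse (t * (1 - t\<^sup>2))) t0 :> Dg"
    unfolding Dg_def by (rule DERIV_inverse_fun[OF dg nz])
  define F' where "F' = (of_nat 2 * (1 * t0 ^ (2 - Suc 0)) - 0) * inverse (t0 * (1 - t0\<^sup>2)) + Dg * (t0\<^sup>2 - 1 / d)"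
  have dF: "DERIV F t0 :> F'"
    unfolding F_def[abs_def] F'_def by (rule DERIV_mult[OF DERIV_diff[OF DERIV_power[OF DERIV_ident] DERIV_const] dig])
  have F'pos: "F' > 0"
  proof -
    have "t0\<^sup>2 - 1 / d = 0" using vp2 unfolding t0_def by simp
    hence "F' = 2 * t0 * inverse (t0 * (1 - t0\<^sup>2))" unfolding F'_def by simp
    thus ?thesis using t0 by simp
  qed
  have dF': "DERIV F (v p) :> F'" using dF unfolding t0_def .
  have Ld: "(\<lambda>y. lie_fun \<eta> v y) differentiable (at p)"
    unfolding lie_fun_def
    by (intro differentiable_sum differentiable_mult ballI etad[OF pW] D2_pd_diff[OF v_D2 pW]) simp
  have "lie_fun \<eta> (\<lambda>x. \<Sum>i\<in>UNIV. \<Sum>j\<in>UNIV. \<sigma> x $ i $ j * \<xi>b x $ i * \<xi>b x $ j) p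
      = lie_fun \<eta> (\<lambda>y. F (v y) * lie_fun \<eta> v y) p"
    by (rule lie_local[OF W_open pW]) (rule S_pt)
  also have "\<dots> = lie_fun \<eta> (\<lambda>y. F (v y)) p * lie_fun \<eta> v p + F (v p) * lie_fun \<eta> (\<lambda>y. lie_fun \<eta> v y) p"
    by (rule lie_mult[OF diff_comp[OF dF' vd[OF pW]] Ld])
  also have "\<dots> = F' * (lie_fun \<eta> v p)\<^sup>2"
    unfolding lie_comp[OF dF' vd[OF pW]] Fp by (simp add: power2_eq_square)
  also have "\<dots> \<ge> 0" using F'pos by simp
  finally show "lie_fun \<eta> (\<lambda>x. \<Sum>i\<in>UNIV. \<Sum>j\<in>UNIV. \<sigma> x $ i $ j * \<xi>b x $ i * \<xi>b x $ j) p \<ge> 0" .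
qed

end


theorem theorem4:
  fixes G :: "real^'n \<Rightarrow> real^'n^'n"
    and U :: "(real^'n) set" and p :: "real^'n"
    and H :: "real \<Rightarrow> real \<Rightarrow> real"
    and n h P s T v :: "real^'n \<Rightarrow> real"
    and u \<xi> \<eta> :: "real^'n \<Rightarrow> real^'n"
    and \<sigma> \<omega> :: "real^'n \<Rightarrow> real^'n^'n"
  defines "d \<equiv> real CARD('n) - 1"
    and "\<xi>b \<equiv> (\<lambda>x. (1 / sqrt \<bar>gdot G x (\<xi> x) (\<xi> x)\<bar>) *\<^sub>R \<xi> x)"
    and "acc \<equiv> (\<lambda>x. \<chi> k. \<Sum>m\<in>UNIV. \<eta> x $ m * cd_vec G \<eta> m k x)"
  assumes dim: "CARD('n) \<ge> 2"
    and U_open: "open U" and pU: "p \<in> U"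
    and metric_smooth: "\<forall>i j. smooth_on U (\<lambda>x. G x $ i $ j)"
    and metric_lorentz: "\<forall>x\<in>U. lorentzian_matrix (G x)"
    and xi_smooth: "\<forall>i. smooth_on U (\<lambda>x. \<xi> x $ i)"
    and xi_killing: "killing_on G \<xi> U"
    and xi_timelike: "\<forall>x\<in>U. gdot G x (\<xi> x) (\<xi> x) < 0"
    and eos: "radiation_eos d H"
    and fluid: "perfect_fluid_on G U H n h P s T u"
    and C2: "Ck 2 U n" "Ck 2 U h" "Ck 2 U P" "Ck 2 U s" "Ck 2 U T" "\<forall>i. Ck 2 U (\<lambda>x. u x $ i)"
    and steady: "\<forall>x\<in>U. lie_fun \<xi> P x = 0 \<and> lie_fun \<xi> s x = 0 \<and> lie_vec \<xi> u x = 0"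
    and decomp_u: "\<forall>x\<in>U. 0 \<le> v x \<and> v x < 1 \<and>
                     u x = (1 / sqrt (1 - (v x)\<^sup>2)) *\<^sub>R (\<xi>b x + v x *\<^sub>R \<eta> x)"
    and eta_unit: "\<forall>x\<in>U. gdot G x (\<eta> x) (\<eta> x) = 1 \<and> gdot G x (\<xi>b x) (\<eta> x) = 0"
    and eta_inv: "\<forall>x\<in>U. lie_vec \<xi> \<eta> x = 0"
    and shear_decomp: "\<forall>x\<in>U. \<forall>i j.
          cd_covec G (lower G \<eta>) i j x - lower G \<eta> x $ i * lower G acc x $ j
            = div_vec G \<eta> x / d * (G x $ i $ j - lower G \<eta> x $ i * lower G \<eta> x $ j)
              + \<sigma> x $ i $ j + \<omega> x $ i $ j"
    and sigma_sym: "\<forall>x\<in>U. \<forall>i j. \<sigma> x $ i $ j = \<sigma> x $ j $ i"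
    and sigma_tracefree: "\<forall>x\<in>U. (\<Sum>i\<in>UNIV. \<Sum>j\<in>UNIV. ginv G x $ i $ j * \<sigma> x $ i $ j) = 0"
    and omega_antisym: "\<forall>x\<in>U. \<forall>i j. \<omega> x $ i $ j = - \<omega> x $ j $ i"
    and sonic: "v p = 1 / sqrt d"
  shows "(\<Sum>i\<in>UNIV. \<Sum>j\<in>UNIV. \<sigma> p $ i $ j * \<xi>b p $ i * \<xi>b p $ j) = 0 \<and>
         lie_fun \<eta> (\<lambda>x. \<Sum>i\<in>UNIV. \<Sum>j\<in>UNIV. \<sigma> x $ i $ j * \<xi>b x $ i * \<xi>b x $ j) p \<ge> 0"
proof -
  interpret fl G U p H n h P s T v u \<xi> \<eta> \<sigma> \<omega> d \<xi>b acc
  proof (unfold_locales)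
    show "d = real CARD('n) - 1" using assms(1) by simp
    show "\<xi>b = (\<lambda>x. (1 / sqrt \<bar>gdot G x (\<xi> x) (\<xi> x)\<bar>) *\<^sub>R \<xi> x)" using assms(2) by simp
    show "acc = (\<lambda>x. \<chi> k. \<Sum>m\<in>UNIV. \<eta> x $ m * cd_vec G \<eta> m k x)" using assms(3) by simp
  qed (fact assms)+
  show ?thesis by (rule fl_main)
qed

end
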